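(* Let $\phi$ be a Drinfeld $A[\underline{t}_s]$-module over $\mathbb{T}_s$ with $\phi_\theta=\theta+A_1\tau+\dots+A_r\tau^r$, $A_r\in\mathbb{T}_s^\times$, and suppose $\Psi\in\mathrm{GL}_r(\mathbb{T}_s\{z/\theta\})$ satisfies $\Psi^{(-1)}=\Phi\Psi$. Set \[ V_\phi=\{\mathbf{g}\in\mathrm{Mat}_{1\times r}(\mathbb{T}_s\{z/\theta\}) \mid \mathbf{g}^{(-1)}\Phi=\mathbf{g}\}. \] Then: (a) $V_\phi=\mathrm{Mat}_{1\times r}(\mathbb{F}_q[\underline{t}_s][z])\,\Psi^{-1}$; (b) $V_\phi$ is a free $\mathbb{F}_q[\underline{t}_s][z]$-module of rank $r$; (c) $V_\phi\cap\mathrm{Mat}_{1\times r}(\mathbb{T}_s[z])=\{0\}$.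
   Context: $\mathbb{F}_q$ finite field, $\theta,t_1,\dots,t_s,z$ independent variables, $A[\underline{t}_s]=\mathbb{F}_q[\theta,t_1,\dots,t_s]$, $\mathbb{F}_q[\underline{t}_s]=\mathbb{F}_q[t_1,\dots,t_s]$. $\mathbb{C}_\infty$: completion of an algebraic closure of $\mathbb{F}_q((1/\theta))$, $|\theta|_\infty=q$. $\mathbb{T}_s$: Tate algebra of power series in $t_1,\dots,t_s$ over $\mathbb{C}_\infty$ with coefficients tending to $0$, Gauss norm $\|\cdot\|_\infty$. $\tau$: automorphism raising $\mathbb{C}_\infty$-coefficients to the $q$-th power, $f^{(n)}=\tau^n(f)$ ($n\in\mathbb{Z}$), applied entrywise to matrices and coefficientwise to power series in $z$ (fixing $z$). $\mathbb{T}_s[\tau]$: twisted polynomial ring with $\tau f=f^{(1)}\tau$. A Drinfeld $A[\underline{t}_s]$-module is an $\mathbb{F}_q[\underline{t}_s]$-algebra homomorphism $\phi:A[\underline{t}_s]\to\mathbb{T}_s[\tau]$ with $\phi_\theta=\theta+A_1\tau+\dots+A_r\tau^r$. $\mathbb{T}_s\{z/\theta\}=\{\sum_{i\ge0}a_iz^i: a_i\in\mathbb{T}_s,\ q^i\|a_i\|_\infty\to0\}$. $\Phi\in\mathrm{Mat}_r(\mathbb{T}_s[z])$ has $i$-th row the $(i+1)$-st standard basis row vector for $1\le i\le r-1$ and last row $\big[(z-\theta)/A_r^{(-r)},-A_1^{(-1)}/A_r^{(-r)},\dots,-A_{r-1}^{(-r+1)}/A_r^{(-r)}\big]$. *)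

theory Defs
  imports "HOL-Computational_Algebra.Polynomial"
begin

definition in_Fq :: "nat \<Rightarrow> 'c::field \<Rightarrow> bool" where
  "in_Fq q c \<longleftrightarrow> c ^ q = c"

definition nonarch_abs :: "('c::field \<Rightarrow> real) \<Rightarrow> bool" where
  "nonarch_abs av \<longleftrightarrow>
     (\<forall>x. av x \<ge> 0) \<and> (\<forall>x. av x = 0 \<longleftrightarrow> x = 0) \<and>
     (\<forall>x y. av (x * y) = av x * av y) \<and>
     (\<forall>x y. av (x + y) \<le> max (av x) (av y))"

definition complete_abs :: "('c::field \<Rightarrow> real) \<Rightarrow> bool" where
  "complete_abs av \<longleftrightarrow>
     (\<forall>X::nat \<Rightarrow> 'c. (\<forall>e>0. \<exists>N. \<forall>m\<ge>N. \<forall>n\<ge>N. av (X m - X n) < e) \<longrightarrow>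
        (\<exists>L. \<forall>e>0. \<exists>N. \<forall>n\<ge>N. av (X n - L) < e))"

definition alg_closed_field :: "'c::field itself \<Rightarrow> bool" where
  "alg_closed_field _ \<longleftrightarrow> (\<forall>P :: 'c poly. degree P \<ge> 1 \<longrightarrow> (\<exists>x. poly P x = 0))"

definition alg_over_Fq_theta :: "nat \<Rightarrow> 'c::field \<Rightarrow> 'c \<Rightarrow> bool" where
  "alg_over_Fq_theta q \<theta> y \<longleftrightarrow>
     (\<exists>P :: 'c poly. P \<noteq> 0 \<and> poly P y = 0 \<and>
        (\<forall>i. \<exists>f :: 'c poly. (\<forall>j. in_Fq q (coeff f j)) \<and> coeff P i = poly f \<theta>))"

definition is_Cinf :: "nat \<Rightarrow> ('c::field \<Rightarrow> real) \<Rightarrow> 'c \<Rightarrow> bool" where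
  "is_Cinf q av \<theta> \<longleftrightarrow>
     (\<exists>p k. prime p \<and> k \<ge> 1 \<and> q = p ^ k \<and> of_nat p = (0::'c)) \<and>
     nonarch_abs av \<and> complete_abs av \<and> alg_closed_field TYPE('c) \<and>
     av \<theta> = real q \<and>
     (\<forall>x e. e > 0 \<longrightarrow> (\<exists>y. alg_over_Fq_theta q \<theta> y \<and> av (x - y) < e))"

definition twc :: "nat \<Rightarrow> int \<Rightarrow> 'c::field \<Rightarrow> 'c" where
  "twc q n c = (if n \<ge> 0 then c ^ (q ^ nat n) else (THE y. y ^ (q ^ nat (- n)) = c))"

text \<open>Multi-indices in N^s are functions nat => nat vanishing from s on.
  Elements of T_s are coefficient functions (multi-index => C).\<close>
definition MI :: "nat \<Rightarrow> (nat \<Rightarrow> nat) set" where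
  "MI s = {\<alpha>. \<forall>i\<ge>s. \<alpha> i = 0}"

definition Tate :: "nat \<Rightarrow> ('c::field \<Rightarrow> real) \<Rightarrow> ((nat \<Rightarrow> nat) \<Rightarrow> 'c) set" where
  "Tate s av = {f. (\<forall>\<alpha>. \<alpha> \<notin> MI s \<longrightarrow> f \<alpha> = 0) \<and>
                   (\<forall>e>0. finite {\<alpha>. av (f \<alpha>) \<ge> e})}"

definition gnorm :: "('c::field \<Rightarrow> real) \<Rightarrow> ((nat \<Rightarrow> nat) \<Rightarrow> 'c) \<Rightarrow> real" where
  "gnorm av f = Sup (range (\<lambda>\<alpha>. av (f \<alpha>)))"

definition tzero :: "(nat \<Rightarrow> nat) \<Rightarrow> 'c::field" where
  "tzero = (\<lambda>\<alpha>. 0)"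

definition tone :: "(nat \<Rightarrow> nat) \<Rightarrow> 'c::field" where
  "tone = (\<lambda>\<alpha>. if \<alpha> = (\<lambda>i. 0) then 1 else 0)"

definition tconst :: "'c::field \<Rightarrow> (nat \<Rightarrow> nat) \<Rightarrow> 'c" where
  "tconst c = (\<lambda>\<alpha>. if \<alpha> = (\<lambda>i. 0) then c else 0)"

definition tmul :: "nat \<Rightarrow> ((nat \<Rightarrow> nat) \<Rightarrow> 'c::field) \<Rightarrow> ((nat \<Rightarrow> nat) \<Rightarrow> 'c) \<Rightarrow> (nat \<Rightarrow> nat) \<Rightarrow> 'c" where
  "tmul s f g = (\<lambda>\<alpha>. \<Sum>\<beta>\<in>{\<beta>\<in>MI s. \<forall>i. \<beta> i \<le> \<alpha> i}. f \<beta> * g (\<lambda>i. \<alpha> i - \<beta> i))"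

definition tunit :: "nat \<Rightarrow> ('c::field \<Rightarrow> real) \<Rightarrow> ((nat \<Rightarrow> nat) \<Rightarrow> 'c) \<Rightarrow> bool" where
  "tunit s av f \<longleftrightarrow> f \<in> Tate s av \<and> (\<exists>g\<in>Tate s av. tmul s f g = tone)"

definition tinv :: "nat \<Rightarrow> ('c::field \<Rightarrow> real) \<Rightarrow> ((nat \<Rightarrow> nat) \<Rightarrow> 'c) \<Rightarrow> (nat \<Rightarrow> nat) \<Rightarrow> 'c" where
  "tinv s av f = (SOME g. g \<in> Tate s av \<and> tmul s f g = tone)"

definition ttw :: "nat \<Rightarrow> int \<Rightarrow> ((nat \<Rightarrow> nat) \<Rightarrow> 'c::field) \<Rightarrow> (nat \<Rightarrow> nat) \<Rightarrow> 'c" where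
  "ttw q n f = (\<lambda>\<alpha>. twc q n (f \<alpha>))"

section \<open>T_s{z/theta}: power series in z with coefficients in T_s\<close>

type_synonym 'c zser = "nat \<Rightarrow> (nat \<Rightarrow> nat) \<Rightarrow> 'c"

definition Zser :: "nat \<Rightarrow> nat \<Rightarrow> ('c::field \<Rightarrow> real) \<Rightarrow> 'c zser set" where
  "Zser q s av = {F. (\<forall>n. F n \<in> Tate s av) \<and>
                     (\<lambda>n. real q ^ n * gnorm av (F n)) \<longlonglongrightarrow> 0}"

definition Tpolyz :: "nat \<Rightarrow> ('c::field \<Rightarrow> real) \<Rightarrow> 'c zser set" where
  "Tpolyz s av = {F. (\<forall>n. F n \<in> Tate s av) \<and> finite {n. F n \<noteq> tzero}}"

definition Fqtz :: "nat \<Rightarrow> nat \<Rightarrow> 'c::field zser set" where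
  "Fqtz q s = {F. finite {n. F n \<noteq> tzero} \<and>
                 (\<forall>n. finite {\<alpha>. F n \<alpha> \<noteq> 0}) \<and>
                 (\<forall>n \<alpha>. \<alpha> \<notin> MI s \<longrightarrow> F n \<alpha> = 0) \<and>
                 (\<forall>n \<alpha>. in_Fq q (F n \<alpha>))}"

definition zzero :: "'c::field zser" where
  "zzero = (\<lambda>n. tzero)"

definition zone :: "'c::field zser" where
  "zone = (\<lambda>n. if n = 0 then tone else tzero)"

definition zmul :: "nat \<Rightarrow> 'c::field zser \<Rightarrow> 'c zser \<Rightarrow> 'c zser" where
  "zmul s F G = (\<lambda>n \<alpha>. \<Sum>k\<le>n. tmul s (F k) (G (n - k)) \<alpha>)"

definition ztw :: "nat \<Rightarrow> int \<Rightarrow> 'c::field zser \<Rightarrow> 'c zser" where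
  "ztw q m F = (\<lambda>n. ttw q m (F n))"

section \<open>Row vectors and r x r matrices (0-based indices below r, zero elsewhere)\<close>

definition rowvecs :: "nat \<Rightarrow> 'c zser set \<Rightarrow> (nat \<Rightarrow> 'c::field zser) set" where
  "rowvecs r R = {g. (\<forall>j<r. g j \<in> R) \<and> (\<forall>j\<ge>r. g j = zzero)}"

definition mats :: "nat \<Rightarrow> 'c zser set \<Rightarrow> (nat \<Rightarrow> nat \<Rightarrow> 'c::field zser) set" where
  "mats r R = {M. (\<forall>i<r. \<forall>j<r. M i j \<in> R) \<and> (\<forall>i j. (i \<ge> r \<or> j \<ge> r) \<longrightarrow> M i j = zzero)}"

definition vecmat :: "nat \<Rightarrow> nat \<Rightarrow> (nat \<Rightarrow> 'c::field zser) \<Rightarrow> (nat \<Rightarrow> nat \<Rightarrow> 'c zser) \<Rightarrow> nat \<Rightarrow> 'c zser" where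
  "vecmat s r g M = (\<lambda>j. if j < r then (\<lambda>n \<alpha>. \<Sum>k<r. zmul s (g k) (M k j) n \<alpha>) else zzero)"

definition matmul :: "nat \<Rightarrow> nat \<Rightarrow> (nat \<Rightarrow> nat \<Rightarrow> 'c::field zser) \<Rightarrow> (nat \<Rightarrow> nat \<Rightarrow> 'c zser) \<Rightarrow> nat \<Rightarrow> nat \<Rightarrow> 'c zser" where
  "matmul s r M N = (\<lambda>i j. if i < r \<and> j < r then (\<lambda>n \<alpha>. \<Sum>k<r. zmul s (M i k) (N k j) n \<alpha>) else zzero)"

definition idmat :: "nat \<Rightarrow> nat \<Rightarrow> nat \<Rightarrow> 'c::field zser" where
  "idmat r = (\<lambda>i j. if i < r \<and> i = j then zone else zzero)"

definition vtw :: "nat \<Rightarrow> int \<Rightarrow> (nat \<Rightarrow> 'c::field zser) \<Rightarrow> nat \<Rightarrow> 'c zser" where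
  "vtw q m g = (\<lambda>j. ztw q m (g j))"

definition mtw :: "nat \<Rightarrow> int \<Rightarrow> (nat \<Rightarrow> nat \<Rightarrow> 'c::field zser) \<Rightarrow> nat \<Rightarrow> nat \<Rightarrow> 'c zser" where
  "mtw q m M = (\<lambda>i j. ztw q m (M i j))"

definition lincomb :: "nat \<Rightarrow> nat \<Rightarrow> (nat \<Rightarrow> 'c::field zser) \<Rightarrow> (nat \<Rightarrow> nat \<Rightarrow> 'c zser) \<Rightarrow> nat \<Rightarrow> 'c zser" where
  "lincomb s r c b = (\<lambda>j. if j < r then (\<lambda>n \<alpha>. \<Sum>i<r. zmul s (c i) (b i j) n \<alpha>) else zzero)"

section \<open>The matrix Phi attached to phi_theta = theta + A_1 tau + ... + A_r tau^r\<close>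

text \<open>A i is the coefficient A_i (1 <= i <= r).\<close>
definition PhiMat :: "nat \<Rightarrow> nat \<Rightarrow> ('c::field \<Rightarrow> real) \<Rightarrow> 'c \<Rightarrow> nat \<Rightarrow> (nat \<Rightarrow> (nat \<Rightarrow> nat) \<Rightarrow> 'c)
                      \<Rightarrow> nat \<Rightarrow> nat \<Rightarrow> 'c zser" where
  "PhiMat q s av \<theta> r A = (\<lambda>i j.
     (let ia = tinv s av (ttw q (- int r) (A r)) in
      if i < r \<and> j < r then
        (if i = r - 1 then
           (if j = 0 then
              (\<lambda>n. if n = 0 then tmul s (tconst (- \<theta>)) ia
                   else if n = 1 then ia else tzero)
            else
              (\<lambda>n. if n = 0 then tmul s (tconst (-1)) (tmul s (ttw q (- int j) (A j)) ia)
                   else tzero))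
         else (if j = i + 1 then zone else zzero))
      else zzero))"

definition Vphi :: "nat \<Rightarrow> nat \<Rightarrow> ('c::field \<Rightarrow> real) \<Rightarrow> 'c \<Rightarrow> nat \<Rightarrow> (nat \<Rightarrow> (nat \<Rightarrow> nat) \<Rightarrow> 'c)
                    \<Rightarrow> (nat \<Rightarrow> 'c zser) set" where
  "Vphi q s av \<theta> r A = {g \<in> rowvecs r (Zser q s av).
       vecmat s r (vtw q (-1) g) (PhiMat q s av \<theta> r A) = g}"

end

theory Submission
  imports Defs "HOL-Library.FuncSet"
begin



lemma frob_p_add:
  fixes x y :: "'c::field"
  assumes p: "prime p" and c: "of_nat p = (0::'c)"
  shows "(x + y) ^ p = x ^ p + y ^ p"
proof -
  have "(x + y) ^ p = (\<Sum>k\<le>p. of_nat (p choose k) * x ^ k * y ^ (p - k))"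
    by (simp add: binomial_ring)
  also have "\<dots> = (\<Sum>k\<in>{0,p}. of_nat (p choose k) * x ^ k * y ^ (p - k))"
  proof (rule sum.mono_neutral_right)
    show "\<forall>i\<in>{..p} - {0, p}. of_nat (p choose i) * x ^ i * y ^ (p - i) = 0"
    proof
      fix i assume i: "i \<in> {..p} - {0, p}"
      have "p dvd (p choose i)" using i p by (intro dvd_choose_prime) (auto simp: prime_gt_0_nat)
      then obtain m where "p choose i = p * m" by blast
      then have "of_nat (p choose i) = (0::'c)" using c by simp
      then show "of_nat (p choose i) * x ^ i * y ^ (p - i) = 0" by simp
    qed
  qed auto
  also have "\<dots> = x ^ p + y ^ p" using p prime_gt_0_nat[OF p] by (simp add: add.commute)
  finally show ?thesis .
qed

lemma frob_add:
  fixes x y :: "'c::field"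
  assumes p: "prime p" and c: "of_nat p = (0::'c)"
  shows "(x + y) ^ (p ^ m) = x ^ (p ^ m) + y ^ (p ^ m)"
proof (induction m)
  case 0 then show ?case by simp
next
  case (Suc m)
  have "(x + y) ^ (p ^ Suc m) = ((x + y) ^ (p ^ m)) ^ p" by (simp only: power_Suc2 power_mult)
  also have "\<dots> = (x ^ (p ^ m)) ^ p + (y ^ (p ^ m)) ^ p" using Suc frob_p_add[OF p c] by simp
  also have "\<dots> = x ^ (p ^ Suc m) + y ^ (p ^ Suc m)" by (simp only: power_Suc2 power_mult)
  finally show ?case .
qed

lemma frob_diff:
  fixes x y :: "'c::field"
  assumes p: "prime p" and c: "of_nat p = (0::'c)"
  shows "(x - y) ^ (p ^ m) = x ^ (p ^ m) - y ^ (p ^ m)"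
  using frob_add[OF p c, of "x - y" y m] by (simp add: algebra_simps)

lemma root_exists:
  fixes c :: "'c::field"
  assumes ac: "alg_closed_field TYPE('c)" and Q: "Q \<ge> 1"
  shows "\<exists>y. y ^ Q = c"
proof -
  let ?P = "monom (1::'c) Q + [:-c:]"
  have "degree ?P = Q" using Q by (subst degree_add_eq_left) (auto simp: degree_monom_eq)
  have H: "\<forall>P::'c poly. degree P \<ge> 1 \<longrightarrow> (\<exists>x. poly P x = 0)" using ac by (simp add: alg_closed_field_def)
  have "1 \<le> degree ?P" using \<open>degree ?P = Q\<close> Q by simp
  from H[rule_format, OF this] have "\<exists>y. poly ?P y = 0" .
  then obtain y where "poly ?P y = 0" by blast
  then have "y ^ Q = c" by (simp add: poly_monom)
  then show ?thesis by blast
qed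

lemma root_unique:
  fixes y z :: "'c::field"
  assumes p: "prime p" and c: "of_nat p = (0::'c)" and e: "y ^ (p ^ m) = z ^ (p ^ m)"
  shows "y = z"
proof -
  have "(y - z) ^ (p ^ m) = 0" using frob_diff[OF p c] e by simp
  then show ?thesis by simp
qed

locale cinf =
  fixes q :: nat and av :: "'c::field \<Rightarrow> real" and \<theta> :: 'c
  assumes Cinf: "is_Cinf q av \<theta>"
begin

definition pp where "pp = (SOME p. \<exists>k. prime p \<and> k \<ge> 1 \<and> q = p ^ k \<and> of_nat p = (0::'c))"
definition kk where "kk = (SOME k. prime pp \<and> k \<ge> 1 \<and> q = pp ^ k \<and> of_nat pp = (0::'c))"

lemma pk: "prime pp" "kk \<ge> 1" "q = pp ^ kk" "of_nat pp = (0::'c)"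
proof -
  have "\<exists>p k. prime p \<and> k \<ge> 1 \<and> q = p ^ k \<and> of_nat p = (0::'c)"
    using Cinf unfolding is_Cinf_def by blast
  then have "\<exists>k. prime pp \<and> k \<ge> 1 \<and> q = pp ^ k \<and> of_nat pp = (0::'c)"
    unfolding pp_def by (rule someI_ex)
  then have "prime pp \<and> kk \<ge> 1 \<and> q = pp ^ kk \<and> of_nat pp = (0::'c)"
    unfolding kk_def by (rule someI_ex)
  then show "prime pp" "kk \<ge> 1" "q = pp ^ kk" "of_nat pp = (0::'c)" by auto
qed

lemma q_ge2: "q \<ge> 2"
proof -
  have "pp \<ge> 2" using pk(1) by (simp add: prime_ge_2_nat)
  moreover have "pp \<le> pp ^ kk" using pk(2) pk(1) self_le_power[of pp kk] prime_gt_0_nat[of pp] by simp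
  ultimately show ?thesis using pk(3) by simp
qed

lemma ac: "alg_closed_field TYPE('c)" using Cinf unfolding is_Cinf_def by blast
lemma nonarch: "nonarch_abs av" using Cinf unfolding is_Cinf_def by blast

lemma av_nonneg: "av x \<ge> 0" using nonarch unfolding nonarch_abs_def by blast
lemma av_zero_iff: "av x = 0 \<longleftrightarrow> x = 0" using nonarch unfolding nonarch_abs_def by blast
lemma av_mult: "av (x * y) = av x * av y" using nonarch unfolding nonarch_abs_def by blast
lemma av_add: "av (x + y) \<le> max (av x) (av y)" using nonarch unfolding nonarch_abs_def by blast

lemma qn_eq: "q ^ n = pp ^ (kk * n)" using pk(3) by (simp add: power_mult)

lemma qn_ge1: "q ^ n \<ge> 1" using q_ge2 by simp

lemma frob_q_add: "(x + y) ^ (q ^ n) = x ^ (q ^ n) + (y::'c) ^ (q ^ n)"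
  unfolding qn_eq using frob_add[OF pk(1) pk(4)] .

lemma root_q_unique: "y ^ (q ^ n) = z ^ (q ^ n) \<Longrightarrow> y = (z::'c)"
  unfolding qn_eq using root_unique[OF pk(1) pk(4)] .

lemma twc_root: "n \<ge> 1 \<Longrightarrow> twc q (- int n) (c::'c) ^ (q ^ n) = c"
proof -
  assume n: "n \<ge> 1"
  obtain y where y: "y ^ (q ^ n) = c" using root_exists[OF ac qn_ge1[of n], of c] by blast
  have "(THE y. y ^ (q ^ n) = c) ^ (q ^ n) = c"
    by (rule theI[of _ y]) (use y root_q_unique in auto)
  then show ?thesis using n by (simp add: twc_def)
qed

lemma twc_eqI: "n \<ge> 1 \<Longrightarrow> y ^ (q ^ n) = (c::'c) \<Longrightarrow> twc q (- int n) c = y"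
  using twc_root root_q_unique by metis

lemma twc_add: "n \<ge> 1 \<Longrightarrow> twc q (- int n) (x + (y::'c)) = twc q (- int n) x + twc q (- int n) y"
  by (metis twc_eqI frob_q_add twc_root)

lemma twc_mult: "n \<ge> 1 \<Longrightarrow> twc q (- int n) (x * (y::'c)) = twc q (- int n) x * twc q (- int n) y"
  by (metis twc_eqI power_mult_distrib twc_root)

lemma twc_zero: "n \<ge> 1 \<Longrightarrow> twc q (- int n) 0 = (0::'c)"
  by (rule twc_eqI) (use q_ge2 in auto)

lemma twc_one: "n \<ge> 1 \<Longrightarrow> twc q (- int n) 1 = (1::'c)"
  by (rule twc_eqI) auto

lemma av_one: "av (1::'c) = 1"
proof -
  have "av 1 = av 1 * av 1" using av_mult[of 1 1] by simp
  moreover have "av 1 \<noteq> 0" using av_zero_iff[of 1] by simp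
  ultimately show ?thesis by (metis mult_cancel_right1)
qed

lemma av_power: "av (y ^ m) = av y ^ m"
  by (induction m) (auto simp: av_mult av_one)

lemma twc_eq0: "n \<ge> 1 \<Longrightarrow> twc q (- int n) x = 0 \<longleftrightarrow> x = (0::'c)"
  by (metis twc_root twc_zero)

lemma twc_sum: "n \<ge> 1 \<Longrightarrow> twc q (- int n) (\<Sum>i\<in>I. f i :: 'c) = (\<Sum>i\<in>I. twc q (- int n) (f i))"
  by (induction I rule: infinite_finite_induct) (auto simp: twc_zero twc_add)

lemma twc_av: "n \<ge> 1 \<Longrightarrow> av (twc q (- int n) x) ^ (q ^ n) = av x"
proof -
  assume n: "n \<ge> 1"
  show ?thesis using twc_root[OF n, of x] av_power by metis
qed

lemma twc1_fixed: "twc q (-1) (c::'c) = c \<Longrightarrow> c ^ q = c"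
  using twc_root[of 1 c] by simp

lemma Fq_twc1: "(c::'c) ^ q = c \<Longrightarrow> twc q (-1) c = c"
  using twc_eqI[of 1 c c] by simp

lemma av_Fq: "(c::'c) ^ q = c \<Longrightarrow> c \<noteq> 0 \<Longrightarrow> av c = 1"
proof -
  assume c: "c ^ q = c" "c \<noteq> 0"
  have "c ^ (q - 1) = 1" using c q_ge2
    by (metis One_nat_def Suc_diff_1 nonzero_mult_div_cancel_left not_numeral_le_zero not_gr0 power_Suc div_self)
  have "av c ^ (q - 1) = 1" using av_power av_one \<open>c ^ (q - 1) = 1\<close> by metis
  then show "av c = 1" using q_ge2 av_nonneg[of c] power_eq_iff_eq_base[of "q - 1" "av c" 1] by simp
qed

end



definition Bset :: "nat \<Rightarrow> (nat \<Rightarrow> nat) \<Rightarrow> (nat \<Rightarrow> nat) set" where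
  "Bset s \<alpha> = {\<beta>\<in>MI s. \<forall>i. \<beta> i \<le> \<alpha> i}"

definition supp :: "nat \<Rightarrow> ((nat \<Rightarrow> nat) \<Rightarrow> 'c::zero) \<Rightarrow> bool" where
  "supp s f \<longleftrightarrow> (\<forall>\<alpha>. \<alpha> \<notin> MI s \<longrightarrow> f \<alpha> = 0)"

lemma finite_Bset: "finite (Bset s \<alpha>)"
proof -
  have inj: "inj_on (\<lambda>\<beta>. restrict \<beta> {..<s}) (Bset s \<alpha>)"
  proof (rule inj_onI)
    fix x y assume x: "x \<in> Bset s \<alpha>" and y: "y \<in> Bset s \<alpha>" and e: "restrict x {..<s} = restrict y {..<s}"
    show "x = y"
    proof
      fix i show "x i = y i"
      proof (cases "i < s")
        case True
        have "restrict x {..<s} i = restrict y {..<s} i" using e by simp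
        then show ?thesis using True by simp
      next
        case False then show ?thesis using x y by (auto simp: Bset_def MI_def)
      qed
    qed
  qed
  have "(\<lambda>\<beta>. restrict \<beta> {..<s}) ` Bset s \<alpha> \<subseteq> PiE {..<s} (\<lambda>i. {..\<alpha> i})"
  proof (rule image_subsetI)
    fix \<beta> assume "\<beta> \<in> Bset s \<alpha>"
    then show "restrict \<beta> {..<s} \<in> PiE {..<s} (\<lambda>i. {..\<alpha> i})"
      by (simp only: restrict_PiE_iff) (auto simp: Bset_def)
  qed
  moreover have "finite (PiE {..<s} (\<lambda>i. {..\<alpha> i}))" by (rule finite_PiE) auto
  ultimately have "finite ((\<lambda>\<beta>. restrict \<beta> {..<s}) ` Bset s \<alpha>)" by (rule finite_subset)
  then show ?thesis using inj finite_imageD by blast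
qed

lemma tmul_def': "tmul s f g \<alpha> = (\<Sum>\<beta>\<in>Bset s \<alpha>. f \<beta> * g (\<lambda>i. \<alpha> i - \<beta> i))"
  by (simp add: tmul_def Bset_def)

lemma zero_in_Bset: "(\<lambda>i. 0) \<in> Bset s \<alpha>" by (simp add: Bset_def MI_def)

lemma self_in_Bset: "\<alpha> \<in> MI s \<Longrightarrow> \<alpha> \<in> Bset s \<alpha>" by (simp add: Bset_def)

lemma diff_notin_MI: "\<alpha> \<notin> MI s \<Longrightarrow> \<beta> \<in> MI s \<Longrightarrow> (\<lambda>i. \<alpha> i - \<beta> i) \<notin> MI s"
  by (auto simp: MI_def)

lemma tmul_supp: "supp s g \<Longrightarrow> supp s (tmul s f g)"
  unfolding supp_def tmul_def' by (auto intro!: sum.neutral simp: Bset_def diff_notin_MI)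

lemma tone_supp: "supp s (tone :: _ \<Rightarrow> 'c::field)"
  by (auto simp: supp_def tone_def MI_def)

lemma tzero_supp: "supp s (tzero :: _ \<Rightarrow> 'c::field)"
  by (auto simp: supp_def tzero_def)

lemma tmul_tone_left: "tmul s tone g = (g :: _ \<Rightarrow> 'c::field)"
proof
  fix \<alpha>
  have "tmul s tone g \<alpha> = (\<Sum>\<beta>\<in>Bset s \<alpha>. if \<beta> = (\<lambda>i. 0) then g (\<lambda>i. \<alpha> i - \<beta> i) else 0)"
    unfolding tmul_def' by (intro sum.cong) (auto simp: tone_def)
  also have "\<dots> = g \<alpha>" using zero_in_Bset[of s \<alpha>] finite_Bset[of s \<alpha>] by (simp add: sum.delta')
  finally show "tmul s tone g \<alpha> = g \<alpha>" .
qed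

lemma tmul_tone_right: "supp s f \<Longrightarrow> tmul s f tone = (f :: _ \<Rightarrow> 'c::field)"
proof
  fix \<alpha> assume sf: "supp s f"
  show "tmul s f tone \<alpha> = f \<alpha>"
  proof (cases "\<alpha> \<in> MI s")
    case True
    have "tmul s f tone \<alpha> = (\<Sum>\<beta>\<in>Bset s \<alpha>. if \<beta> = \<alpha> then f \<beta> else 0)"
      unfolding tmul_def'
    proof (intro sum.cong refl)
      fix \<beta> assume b: "\<beta> \<in> Bset s \<alpha>"
      have "(\<lambda>i. \<alpha> i - \<beta> i) = (\<lambda>i. 0) \<longleftrightarrow> \<beta> = \<alpha>"
        using b by (auto simp: Bset_def fun_eq_iff) (metis diff_is_0_eq le_antisym)
      then show "f \<beta> * tone (\<lambda>i. \<alpha> i - \<beta> i) = (if \<beta> = \<alpha> then f \<beta> else 0)"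
        by (auto simp: tone_def)
    qed
    also have "\<dots> = f \<alpha>" using self_in_Bset[OF True] finite_Bset[of s \<alpha>] by (simp add: sum.delta')
    finally show ?thesis .
  next
    case False
    have "(\<lambda>i. \<alpha> i - \<beta> i) \<noteq> (\<lambda>i. 0)" if "\<beta> \<in> Bset s \<alpha>" for \<beta>
    proof
      assume e: "(\<lambda>i. \<alpha> i - \<beta> i) = (\<lambda>i. 0)"
      have "\<beta> \<in> MI s" using that by (simp add: Bset_def)
      from diff_notin_MI[OF False this] e show False by (simp add: MI_def)
    qed
    then have "tmul s f tone \<alpha> = 0" unfolding tmul_def'
      by (intro sum.neutral) (auto simp: tone_def)
    then show ?thesis using False sf by (simp add: supp_def)
  qed
qed

lemma tmul_tzero_left: "tmul s tzero g = (tzero :: _ \<Rightarrow> 'c::field)"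
  by (auto simp: tmul_def' tzero_def fun_eq_iff)

lemma tmul_tzero_right: "tmul s f tzero = (tzero :: _ \<Rightarrow> 'c::field)"
  by (auto simp: tmul_def' tzero_def fun_eq_iff)

lemma tmul_0_left [simp]: "tmul s (\<lambda>_. 0) g \<alpha> = (0 :: 'c::field)"
  by (simp add: tmul_def')

lemma tmul_0_right [simp]: "tmul s f (\<lambda>_. 0) \<alpha> = (0 :: 'c::field)"
  by (simp add: tmul_def')

lemma tmul_sum_left:
  "tmul s (\<lambda>\<alpha>. \<Sum>i\<in>I. F i \<alpha>) g \<alpha> = (\<Sum>i\<in>I. tmul s (F i) g \<alpha> :: 'c::field)"
  unfolding tmul_def' by (simp add: sum_distrib_right sum.swap[of _ I])

lemma tmul_sum_right:
  "tmul s f (\<lambda>\<alpha>. \<Sum>i\<in>I. G i \<alpha>) \<alpha> = (\<Sum>i\<in>I. tmul s f (G i) \<alpha> :: 'c::field)"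
  unfolding tmul_def' by (simp add: sum_distrib_left sum.swap[of _ I])

lemma tmul_assoc: "tmul s (tmul s f g) h = tmul s f (tmul s g h :: _ \<Rightarrow> 'c::field)"
proof
  fix \<alpha>
  have "tmul s (tmul s f g) h \<alpha> =
      (\<Sum>\<beta>\<in>Bset s \<alpha>. \<Sum>\<gamma>\<in>Bset s \<beta>. f \<gamma> * g (\<lambda>i. \<beta> i - \<gamma> i) * h (\<lambda>i. \<alpha> i - \<beta> i))"
    unfolding tmul_def' by (simp add: sum_distrib_right)
  also have "\<dots> = (\<Sum>(\<beta>,\<gamma>)\<in>Sigma (Bset s \<alpha>) (Bset s). f \<gamma> * g (\<lambda>i. \<beta> i - \<gamma> i) * h (\<lambda>i. \<alpha> i - \<beta> i))"
    by (rule sum.Sigma) (auto simp: finite_Bset)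
  also have "\<dots> = (\<Sum>(\<gamma>,\<delta>)\<in>Sigma (Bset s \<alpha>) (\<lambda>\<gamma>. Bset s (\<lambda>i. \<alpha> i - \<gamma> i)).
                      f \<gamma> * (g \<delta> * h (\<lambda>i. \<alpha> i - \<gamma> i - \<delta> i)))"
  proof (rule sum.reindex_bij_witness[where i = "\<lambda>(\<gamma>,\<delta>). (\<lambda>i. \<gamma> i + \<delta> i, \<gamma>)"
                                         and j = "\<lambda>(\<beta>,\<gamma>). (\<gamma>, \<lambda>i. \<beta> i - \<gamma> i)"])
    fix a assume "a \<in> Sigma (Bset s \<alpha>) (Bset s)"
    then show "(case case a of (\<beta>, \<gamma>) \<Rightarrow> (\<gamma>, \<lambda>i. \<beta> i - \<gamma> i) of (\<gamma>, \<delta>) \<Rightarrow> (\<lambda>i. \<gamma> i + \<delta> i, \<gamma>)) = a"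
      by (auto simp: Bset_def fun_eq_iff)
  next
    fix a assume "a \<in> Sigma (Bset s \<alpha>) (Bset s)"
    then obtain \<beta> \<gamma> where ab: "a = (\<beta>,\<gamma>)" "\<beta> \<in> Bset s \<alpha>" "\<gamma> \<in> Bset s \<beta>" by auto
    have "\<gamma> \<in> Bset s \<alpha>" using ab by (simp add: Bset_def) (meson order_trans)
    moreover have "(\<lambda>i. \<beta> i - \<gamma> i) \<in> Bset s (\<lambda>i. \<alpha> i - \<gamma> i)" using ab by (simp add: Bset_def MI_def diff_le_mono)
    ultimately show "(case a of (\<beta>, \<gamma>) \<Rightarrow> (\<gamma>, \<lambda>i. \<beta> i - \<gamma> i)) \<in> Sigma (Bset s \<alpha>) (\<lambda>\<gamma>. Bset s (\<lambda>i. \<alpha> i - \<gamma> i))"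
      using ab by simp
  next
    fix b assume "b \<in> Sigma (Bset s \<alpha>) (\<lambda>\<gamma>. Bset s (\<lambda>i. \<alpha> i - \<gamma> i))"
    then show "(case case b of (\<gamma>, \<delta>) \<Rightarrow> (\<lambda>i. \<gamma> i + \<delta> i, \<gamma>) of (\<beta>, \<gamma>) \<Rightarrow> (\<gamma>, \<lambda>i. \<beta> i - \<gamma> i)) = b"
      by (auto simp: fun_eq_iff)
  next
    fix b assume "b \<in> Sigma (Bset s \<alpha>) (\<lambda>\<gamma>. Bset s (\<lambda>i. \<alpha> i - \<gamma> i))"
    then show "(case b of (\<gamma>, \<delta>) \<Rightarrow> (\<lambda>i. \<gamma> i + \<delta> i, \<gamma>)) \<in> Sigma (Bset s \<alpha>) (Bset s)"
      by (auto simp: Bset_def MI_def) (metis le_diff_conv2 add.commute)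
  next
    fix a assume "a \<in> Sigma (Bset s \<alpha>) (Bset s)"
    then show "(case case a of (\<beta>, \<gamma>) \<Rightarrow> (\<gamma>, \<lambda>i. \<beta> i - \<gamma> i) of (\<gamma>, \<delta>) \<Rightarrow> f \<gamma> * (g \<delta> * h (\<lambda>i. \<alpha> i - \<gamma> i - \<delta> i))) =
          (case a of (\<beta>, \<gamma>) \<Rightarrow> f \<gamma> * g (\<lambda>i. \<beta> i - \<gamma> i) * h (\<lambda>i. \<alpha> i - \<beta> i))"
      by (auto simp: Bset_def fun_eq_iff mult.assoc)
  qed
  also have "\<dots> = (\<Sum>\<gamma>\<in>Bset s \<alpha>. \<Sum>\<delta>\<in>Bset s (\<lambda>i. \<alpha> i - \<gamma> i). f \<gamma> * (g \<delta> * h (\<lambda>i. \<alpha> i - \<gamma> i - \<delta> i)))"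
    by (rule sum.Sigma[symmetric]) (auto simp: finite_Bset)
  also have "\<dots> = tmul s f (tmul s g h) \<alpha>"
    unfolding tmul_def' by (simp add: sum_distrib_left)
  finally show "tmul s (tmul s f g) h \<alpha> = tmul s f (tmul s g h) \<alpha>" .
qed

lemma tmul_comm: "supp s f \<Longrightarrow> supp s g \<Longrightarrow> tmul s f g = (tmul s g f :: _ \<Rightarrow> 'c::field)"
proof
  fix \<alpha> assume sf: "supp s f" and sg: "supp s g"
  show "tmul s f g \<alpha> = tmul s g f \<alpha>"
  proof (cases "\<alpha> \<in> MI s")
    case True
    show ?thesis unfolding tmul_def'
    proof (rule sum.reindex_bij_witness[where i = "\<lambda>\<beta> i. \<alpha> i - \<beta> i" and j = "\<lambda>\<beta> i. \<alpha> i - \<beta> i"])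
      fix a assume "a \<in> Bset s \<alpha>" then show "(\<lambda>i. \<alpha> i - (\<alpha> i - a i)) = a"
        by (auto simp: Bset_def fun_eq_iff)
    next
      fix a assume "a \<in> Bset s \<alpha>" then show "(\<lambda>i. \<alpha> i - a i) \<in> Bset s \<alpha>"
        using True by (auto simp: Bset_def MI_def)
    next
      fix a assume "a \<in> Bset s \<alpha>" then show "(\<lambda>i. \<alpha> i - (\<alpha> i - a i)) = a"
        by (auto simp: Bset_def fun_eq_iff)
    next
      fix a assume "a \<in> Bset s \<alpha>" then show "(\<lambda>i. \<alpha> i - a i) \<in> Bset s \<alpha>"
        using True by (auto simp: Bset_def MI_def)
    next
      fix a assume "a \<in> Bset s \<alpha>" then show "g (\<lambda>i. \<alpha> i - a i) * f (\<lambda>i. \<alpha> i - (\<alpha> i - a i)) = f a * g (\<lambda>i. \<alpha> i - a i)"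
        by (auto simp: Bset_def fun_eq_iff mult.commute cong: rev_conj_cong)
    qed
  next
    case False
    then show ?thesis using tmul_supp[OF sf, of g] tmul_supp[OF sg, of f] by (simp add: supp_def)
  qed
qed

context cinf begin

lemma ttw_tmul: "n \<ge> 1 \<Longrightarrow> ttw q (- int n) (tmul s f g) = tmul s (ttw q (- int n) f) (ttw q (- int n) (g :: _ \<Rightarrow> 'c))"
  by (simp add: ttw_def tmul_def' fun_eq_iff twc_sum twc_mult)

lemma twc_tmul: "n \<ge> 1 \<Longrightarrow> twc q (- int n) (tmul s f g \<alpha>) = tmul s (\<lambda>\<alpha>. twc q (- int n) (f \<alpha>)) (\<lambda>\<alpha>. twc q (- int n) (g \<alpha> :: 'c)) \<alpha>"
  by (simp add: tmul_def' twc_sum twc_mult)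

lemma ttw_supp: "n \<ge> 1 \<Longrightarrow> supp s f \<Longrightarrow> supp s (ttw q (- int n) (f :: _ \<Rightarrow> 'c))"
  by (simp add: ttw_def supp_def twc_zero)

lemma ttw_tone: "n \<ge> 1 \<Longrightarrow> ttw q (- int n) tone = (tone :: _ \<Rightarrow> 'c)"
  by (simp add: ttw_def tone_def fun_eq_iff twc_zero twc_one)

lemma ttw_tzero: "n \<ge> 1 \<Longrightarrow> ttw q (- int n) tzero = (tzero :: _ \<Rightarrow> 'c)"
  by (simp add: ttw_def tzero_def fun_eq_iff twc_zero)

lemma ttw_eq_tzero: "n \<ge> 1 \<Longrightarrow> ttw q (- int n) f = tzero \<longleftrightarrow> f = (tzero :: _ \<Rightarrow> 'c)"
  by (simp add: ttw_def tzero_def fun_eq_iff twc_eq0)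

end



definition zsupp :: "nat \<Rightarrow> 'c::field zser \<Rightarrow> bool" where
  "zsupp s F \<longleftrightarrow> (\<forall>n. supp s (F n))"

lemma zmul_def': "zmul s F G n \<alpha> = (\<Sum>k\<le>n. tmul s (F k) (G (n - k)) \<alpha>)"
  by (simp add: zmul_def)

lemma supp_sum: "(\<And>i. i \<in> I \<Longrightarrow> supp s (F i)) \<Longrightarrow> supp s (\<lambda>\<alpha>. \<Sum>i\<in>I. F i \<alpha> :: 'c::field)"
  by (simp add: supp_def)

lemma zmul_zsupp: "zsupp s G \<Longrightarrow> zsupp s (zmul s F G)"
  unfolding zsupp_def zmul_def by (auto intro!: supp_sum tmul_supp)

lemma zzero_zsupp: "zsupp s (zzero :: 'c::field zser)"
  by (simp add: zsupp_def zzero_def tzero_supp)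

lemma zone_zsupp: "zsupp s (zone :: 'c::field zser)"
  by (simp add: zsupp_def zone_def tzero_supp tone_supp)

lemma zmul_zone_left: "zmul s zone G = (G :: 'c::field zser)"
proof (intro ext)
  fix n \<alpha>
  have "zmul s zone G n \<alpha> = (\<Sum>k\<le>n. if k = 0 then G n \<alpha> else 0)"
    unfolding zmul_def' by (intro sum.cong) (auto simp: zone_def tmul_tone_left tmul_tzero_left tzero_def)
  also have "\<dots> = G n \<alpha>" by (simp add: sum.delta)
  finally show "zmul s zone G n \<alpha> = G n \<alpha>" .
qed

lemma zmul_zone_right: "zsupp s F \<Longrightarrow> zmul s F zone = (F :: 'c::field zser)"
proof (intro ext)
  fix n \<alpha> assume sF: "zsupp s F"
  have "zmul s F zone n \<alpha> = (\<Sum>k\<le>n. if k = n then F n \<alpha> else 0)"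
    unfolding zmul_def' using sF
    by (intro sum.cong) (auto simp: zone_def tmul_tone_right tmul_tzero_right tzero_def zsupp_def)
  also have "\<dots> = F n \<alpha>" by (simp add: sum.delta')
  finally show "zmul s F zone n \<alpha> = F n \<alpha>" .
qed

lemma zmul_zzero_left: "zmul s zzero G = (zzero :: 'c::field zser)"
  by (simp add: zmul_def zzero_def tmul_tzero_left fun_eq_iff tzero_def)

lemma zmul_zzero_right: "zmul s F zzero = (zzero :: 'c::field zser)"
  by (simp add: zmul_def zzero_def tmul_tzero_right fun_eq_iff tzero_def)

lemma zmul_0_left [simp]: "zmul s (\<lambda>n \<alpha>. 0) G n \<alpha> = (0 :: 'c::field)"
  by (simp add: zmul_def')

lemma zmul_0_right [simp]: "zmul s F (\<lambda>n \<alpha>. 0) n \<alpha> = (0 :: 'c::field)"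
  by (simp add: zmul_def')

lemma zmul_sum_left:
  "zmul s (\<lambda>n \<alpha>. \<Sum>i\<in>I. F i n \<alpha>) G n \<alpha> = (\<Sum>i\<in>I. zmul s (F i) G n \<alpha> :: 'c::field)"
  unfolding zmul_def' by (simp add: tmul_sum_left sum.swap[of _ I])

lemma zmul_sum_right:
  "zmul s F (\<lambda>n \<alpha>. \<Sum>i\<in>I. G i n \<alpha>) n \<alpha> = (\<Sum>i\<in>I. zmul s F (G i) n \<alpha> :: 'c::field)"
  unfolding zmul_def' by (simp add: tmul_sum_right sum.swap[of _ I])

lemma zmul_assoc: "zmul s (zmul s F G) H = zmul s F (zmul s G H :: 'c::field zser)"
proof (intro ext)
  fix n \<alpha>
  define a where "a = (\<lambda>m l. tmul s (F m) (tmul s (G l) (H (n - (m + l)))) \<alpha>)"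
  have "zmul s (zmul s F G) H n \<alpha> = (\<Sum>k\<le>n. \<Sum>m\<le>k. tmul s (tmul s (F m) (G (k - m))) (H (n - k)) \<alpha>)"
    unfolding zmul_def' zmul_def by (simp add: tmul_sum_left)
  also have "\<dots> = (\<Sum>k\<le>n. \<Sum>m\<le>k. a m (k - m))"
    unfolding a_def by (intro sum.cong refl) (simp add: tmul_assoc)
  also have "\<dots> = (\<Sum>(m,l)\<in>{(i,j). i+j \<le> n}. a m l)"
    by (rule sum.triangle_reindex_eq[symmetric])
  also have "{(i,j). i+j \<le> n} = Sigma {..n} (\<lambda>m. {..n-m})" by auto
  also have "(\<Sum>(m,l)\<in>Sigma {..n} (\<lambda>m. {..n-m}). a m l) = (\<Sum>m\<le>n. \<Sum>l\<le>n-m. a m l)"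
    by (rule sum.Sigma[symmetric]) auto
  also have "\<dots> = zmul s F (zmul s G H) n \<alpha>"
    unfolding zmul_def' zmul_def a_def by (simp add: tmul_sum_right diff_diff_left)
  finally show "zmul s (zmul s F G) H n \<alpha> = zmul s F (zmul s G H) n \<alpha>" .
qed

lemma sum_zmul_unit_right:
  assumes "j < (r::nat)" "zsupp s (X j)"
  shows "(\<Sum>k<r. zmul s (X k) (if k = j then zone else zzero) n \<alpha>) = (X j n \<alpha> :: 'c::field)"
proof -
  have "(\<Sum>k<r. zmul s (X k) (if k = j then zone else zzero) n \<alpha>) = (\<Sum>k<r. if k = j then X j n \<alpha> else 0)"
  proof (rule sum.cong[OF refl])
    fix k show "zmul s (X k) (if k = j then zone else zzero) n \<alpha> = (if k = j then X j n \<alpha> else 0)"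
      using assms by (cases "k = j") (simp_all add: zmul_zone_right zmul_zzero_right zzero_def tzero_def)
  qed
  also have "\<dots> = X j n \<alpha>" using assms(1) by (subst sum.delta) simp_all
  finally show ?thesis .
qed

lemma sum_zmul_unit_left:
  assumes "i < (r::nat)"
  shows "(\<Sum>k<r. zmul s (if k = i then zone else zzero) (X k) n \<alpha>) = (X i n \<alpha> :: 'c::field)"
proof -
  have "(\<Sum>k<r. zmul s (if k = i then zone else zzero) (X k) n \<alpha>) = (\<Sum>k<r. if k = i then X i n \<alpha> else 0)"
  proof (rule sum.cong[OF refl])
    fix k show "zmul s (if k = i then zone else zzero) (X k) n \<alpha> = (if k = i then X i n \<alpha> else 0)"
      by (cases "k = i") (simp_all add: zmul_zone_left zmul_zzero_left zzero_def tzero_def)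
  qed
  also have "\<dots> = X i n \<alpha>" using assms(1) by (subst sum.delta) simp_all
  finally show ?thesis .
qed

lemma vecmat_assoc:
  "vecmat s r (vecmat s r g M) N = vecmat s r g (matmul s r M (N :: nat \<Rightarrow> nat \<Rightarrow> 'c::field zser))"
proof (intro ext)
  fix j n \<alpha>
  show "vecmat s r (vecmat s r g M) N j n \<alpha> = vecmat s r g (matmul s r M N) j n \<alpha>"
  proof (cases "j < r")
    case True
    have "vecmat s r (vecmat s r g M) N j n \<alpha> = (\<Sum>k<r. \<Sum>l<r. zmul s (zmul s (g l) (M l k)) (N k j) n \<alpha>)"
      using True by (simp add: vecmat_def zmul_sum_left)
    also have "\<dots> = (\<Sum>l<r. \<Sum>k<r. zmul s (g l) (zmul s (M l k) (N k j)) n \<alpha>)"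
      by (subst sum.swap) (simp add: zmul_assoc)
    also have "\<dots> = vecmat s r g (matmul s r M N) j n \<alpha>"
      using True by (simp add: vecmat_def matmul_def zmul_sum_right)
    finally show ?thesis .
  qed (simp add: vecmat_def)
qed

lemma matmul_assoc:
  "matmul s r (matmul s r X M) N = matmul s r X (matmul s r M (N :: nat \<Rightarrow> nat \<Rightarrow> 'c::field zser))"
proof (intro ext)
  fix i j n \<alpha>
  show "matmul s r (matmul s r X M) N i j n \<alpha> = matmul s r X (matmul s r M N) i j n \<alpha>"
  proof (cases "i < r \<and> j < r")
    case True
    have "matmul s r (matmul s r X M) N i j n \<alpha> = (\<Sum>k<r. \<Sum>l<r. zmul s (zmul s (X i l) (M l k)) (N k j) n \<alpha>)"
      using True by (simp add: matmul_def zmul_sum_left)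
    also have "\<dots> = (\<Sum>l<r. \<Sum>k<r. zmul s (X i l) (zmul s (M l k) (N k j)) n \<alpha>)"
      by (subst sum.swap) (simp add: zmul_assoc)
    also have "\<dots> = matmul s r X (matmul s r M N) i j n \<alpha>"
      using True by (simp add: matmul_def zmul_sum_right)
    finally show ?thesis .
  qed (auto simp: matmul_def)
qed

lemma vecmat_idmat:
  assumes "\<And>j. j < r \<Longrightarrow> zsupp s (g j)" "\<And>j. j \<ge> r \<Longrightarrow> g j = zzero"
  shows "vecmat s r g (idmat r) = (g :: nat \<Rightarrow> 'c::field zser)"
proof (intro ext)
  fix j n \<alpha>
  show "vecmat s r g (idmat r) j n \<alpha> = g j n \<alpha>"
  proof (cases "j < r")
    case True
    have I: "idmat r k j = (if k = j then zone else zzero)" if "k < r" for k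
      using that True by (auto simp: idmat_def)
    have "vecmat s r g (idmat r) j n \<alpha> = (\<Sum>k<r. zmul s (g k) (idmat r k j) n \<alpha>)"
      using True by (simp add: vecmat_def)
    also have "\<dots> = (\<Sum>k<r. zmul s (g k) (if k = j then zone else zzero) n \<alpha>)"
      by (rule sum.cong[OF refl]) (simp add: I)
    also have "\<dots> = g j n \<alpha>" using sum_zmul_unit_right[of j r s g, OF True assms(1)[OF True]] .
    finally show ?thesis .
  qed (simp add: vecmat_def assms(2))
qed

lemma matmul_idmat_right:
  assumes "\<And>i j. i < r \<Longrightarrow> j < r \<Longrightarrow> zsupp s (X i j)" "\<And>i j. i \<ge> r \<or> j \<ge> r \<Longrightarrow> X i j = zzero"
  shows "matmul s r X (idmat r) = (X :: nat \<Rightarrow> nat \<Rightarrow> 'c::field zser)"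
proof (intro ext)
  fix i j n \<alpha>
  show "matmul s r X (idmat r) i j n \<alpha> = X i j n \<alpha>"
  proof (cases "i < r \<and> j < r")
    case True
    have I: "idmat r k j = (if k = j then zone else zzero)" if "k < r" for k
      using that True by (auto simp: idmat_def)
    have "matmul s r X (idmat r) i j n \<alpha> = (\<Sum>k<r. zmul s (X i k) (idmat r k j) n \<alpha>)"
      using True by (simp add: matmul_def)
    also have "\<dots> = (\<Sum>k<r. zmul s (X i k) (if k = j then zone else zzero) n \<alpha>)"
      by (rule sum.cong[OF refl]) (simp add: I)
    also have "\<dots> = X i j n \<alpha>" using sum_zmul_unit_right[of j r s "X i"] True assms(1) by simp
    finally show ?thesis .
  next
    case False then show ?thesis using assms(2)[of i j] by (auto simp: matmul_def)
  qed
qed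

lemma matmul_idmat_left:
  assumes "\<And>i j. i \<ge> r \<or> j \<ge> r \<Longrightarrow> X i j = zzero"
  shows "matmul s r (idmat r) X = (X :: nat \<Rightarrow> nat \<Rightarrow> 'c::field zser)"
proof (intro ext)
  fix i j n \<alpha>
  show "matmul s r (idmat r) X i j n \<alpha> = X i j n \<alpha>"
  proof (cases "i < r \<and> j < r")
    case True
    have I: "idmat r i k = (if k = i then zone else zzero)" if "k < r" for k
      using that True by (auto simp: idmat_def)
    have "matmul s r (idmat r) X i j n \<alpha> = (\<Sum>k<r. zmul s (idmat r i k) (X k j) n \<alpha>)"
      using True by (simp add: matmul_def)
    also have "\<dots> = (\<Sum>k<r. zmul s (if k = i then zone else zzero) (X k j) n \<alpha>)"
      by (rule sum.cong[OF refl]) (simp add: I)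
    also have "\<dots> = X i j n \<alpha>" using sum_zmul_unit_left[of i r s "\<lambda>k. X k j"] True by simp
    finally show ?thesis .
  next
    case False then show ?thesis using assms[of i j] by (auto simp: matmul_def)
  qed
qed

lemma vecmat_unit:
  assumes "i < r" "\<And>k j. k \<ge> r \<or> j \<ge> r \<Longrightarrow> M k j = zzero"
  shows "vecmat s r (\<lambda>j. if j = i then zone else zzero) M = (M i :: nat \<Rightarrow> 'c::field zser)"
proof (intro ext)
  fix j n \<alpha>
  show "vecmat s r (\<lambda>j. if j = i then zone else zzero) M j n \<alpha> = M i j n \<alpha>"
  proof (cases "j < r")
    case True
    have "vecmat s r (\<lambda>j. if j = i then zone else zzero) M j n \<alpha> = (\<Sum>k<r. zmul s (if k = i then zone else zzero) (M k j) n \<alpha>)"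
      using True by (simp add: vecmat_def)
    also have "\<dots> = M i j n \<alpha>" using sum_zmul_unit_left[of i r s "\<lambda>k. M k j"] assms(1) by simp
    finally show ?thesis .
  next
    case False then show ?thesis using assms(2)[of i j] by (auto simp: vecmat_def)
  qed
qed

lemma vecmat_zsupp: "(\<And>k j. zsupp s (M k j)) \<Longrightarrow> zsupp s (vecmat s r g M j :: 'c::field zser)"
  unfolding vecmat_def zsupp_def
  by (auto intro!: supp_sum simp: zmul_zsupp[unfolded zsupp_def] zzero_def tzero_supp)

lemma matmul_zsupp: "(\<And>k j. zsupp s (M k j)) \<Longrightarrow> zsupp s (matmul s r X M i j :: 'c::field zser)"
  unfolding matmul_def zsupp_def
  by (auto intro!: supp_sum simp: zmul_zsupp[unfolded zsupp_def] zzero_def tzero_supp)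

context cinf begin

lemma twc1_add: "twc q (-1) (x + (y::'c)) = twc q (-1) x + twc q (-1) y" using twc_add[of 1] by simp
lemma twc1_mult: "twc q (-1) (x * (y::'c)) = twc q (-1) x * twc q (-1) y" using twc_mult[of 1] by simp
lemma twc1_zero: "twc q (-1) 0 = (0::'c)" using twc_zero[of 1] by simp
lemma twc1_one: "twc q (-1) 1 = (1::'c)" using twc_one[of 1] by simp
lemma twc1_sum: "twc q (-1) (\<Sum>i\<in>I. f i :: 'c) = (\<Sum>i\<in>I. twc q (-1) (f i))" using twc_sum[of 1] by simp
lemma twc1_eq0: "twc q (-1) x = 0 \<longleftrightarrow> x = (0::'c)" using twc_eq0[of 1] by simp

lemma ttw1_tmul: "ttw q (-1) (tmul s f g) = tmul s (ttw q (-1) f) (ttw q (-1) (g :: _ \<Rightarrow> 'c))"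
  using ttw_tmul[of 1] by simp

lemma ztw_zmul: "ztw q (-1) (zmul s F G) = zmul s (ztw q (-1) F) (ztw q (-1) (G :: 'c zser))"
  using twc_tmul[of 1] by (simp add: ztw_def zmul_def ttw_def fun_eq_iff twc1_sum)

lemma ztw_zzero: "ztw q (-1) zzero = (zzero :: 'c zser)"
  by (simp add: ztw_def zzero_def ttw_def tzero_def twc1_zero)

lemma ztw_zone: "ztw q (-1) zone = (zone :: 'c zser)"
  by (simp add: ztw_def zone_def ttw_def tzero_def tone_def twc1_zero twc1_one fun_eq_iff)

lemma ztw_sum: "ztw q (-1) (\<lambda>n \<alpha>. \<Sum>i\<in>I. F i n \<alpha>) = (\<lambda>n \<alpha>. \<Sum>i\<in>I. ztw q (-1) (F i :: 'c zser) n \<alpha>)"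
  by (simp add: ztw_def ttw_def twc1_sum)

lemma vtw_vecmat: "vtw q (-1) (vecmat s r g M) = vecmat s r (vtw q (-1) g) (mtw q (-1) (M :: nat \<Rightarrow> nat \<Rightarrow> 'c zser))"
proof
  fix j show "vtw q (-1) (vecmat s r g M) j = vecmat s r (vtw q (-1) g) (mtw q (-1) M) j"
    by (cases "j < r") (simp_all add: vtw_def mtw_def vecmat_def ztw_zzero ztw_sum ztw_zmul)
qed

lemma mtw_matmul: "mtw q (-1) (matmul s r X M) = matmul s r (mtw q (-1) X) (mtw q (-1) (M :: nat \<Rightarrow> nat \<Rightarrow> 'c zser))"
proof (rule ext, rule ext)
  fix i j show "mtw q (-1) (matmul s r X M) i j = matmul s r (mtw q (-1) X) (mtw q (-1) M) i j"
    by (simp add: mtw_def matmul_def ztw_zzero ztw_sum ztw_zmul)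
qed

lemma mtw_idmat: "mtw q (-1) (idmat r) = (idmat r :: nat \<Rightarrow> nat \<Rightarrow> 'c zser)"
  by (auto simp: mtw_def idmat_def fun_eq_iff ztw_zzero ztw_zone)

lemma ztw_zsupp: "zsupp s F \<Longrightarrow> zsupp s (ztw q (-1) (F :: 'c zser))"
  using ttw_supp[of 1] by (simp add: zsupp_def ztw_def)

end



context cinf begin

lemma av_sum_le: "(\<And>i. i \<in> I \<Longrightarrow> av (f i) \<le> M) \<Longrightarrow> 0 \<le> M \<Longrightarrow> av (\<Sum>i\<in>I. f i :: 'c) \<le> M"
proof (induction I rule: infinite_finite_induct)
  case (infinite A) then show ?case using av_zero_iff[of 0] by simp
next
  case empty then show ?case using av_zero_iff[of 0] by simp
next
  case (insert x F)
  then have "av (f x) \<le> M" "av (sum f F) \<le> M" by auto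
  then have "av (f x + sum f F) \<le> M" using av_add[of "f x" "sum f F"] by (meson max.boundedI order_trans)
  then show ?case using insert by simp
qed

lemma av_sum_less: "(\<And>i. i \<in> I \<Longrightarrow> av (f i) < e) \<Longrightarrow> 0 < e \<Longrightarrow> av (\<Sum>i\<in>I. f i :: 'c) < e"
proof (induction I rule: infinite_finite_induct)
  case (infinite A) then show ?case using av_zero_iff[of 0] by simp
next
  case empty then show ?case using av_zero_iff[of 0] by simp
next
  case (insert x F)
  then have "av (f x) < e" "av (sum f F) < e" by auto
  then have "av (f x + sum f F) < e" using av_add[of "f x" "sum f F"] by (meson max_less_iff_conj le_less_trans)
  then show ?case using insert by simp
qed

lemma Tate_supp: "f \<in> Tate s av \<Longrightarrow> supp s f"
  by (simp add: Tate_def supp_def)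

lemma Tate_bdd: "f \<in> Tate s av \<Longrightarrow> bdd_above (range (\<lambda>\<alpha>. av (f \<alpha>)))"
proof -
  assume f: "f \<in> Tate s av"
  define S where "S = {\<alpha>. av (f \<alpha>) \<ge> 1}"
  have fin: "finite S" using f unfolding Tate_def S_def by auto
  have "av (f \<alpha>) \<le> 1 + (\<Sum>\<beta>\<in>S. av (f \<beta>))" for \<alpha>
  proof (cases "\<alpha> \<in> S")
    case True
    then have "av (f \<alpha>) \<le> (\<Sum>\<beta>\<in>S. av (f \<beta>))" using fin av_nonneg by (intro member_le_sum) auto
    then show ?thesis by simp
  next
    case False
    then have "av (f \<alpha>) < 1" by (simp add: S_def)
    moreover have "0 \<le> (\<Sum>\<beta>\<in>S. av (f \<beta>))" using av_nonneg by (intro sum_nonneg) auto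
    ultimately show ?thesis by simp
  qed
  then show ?thesis by (intro bdd_aboveI2) auto
qed

lemma gnorm_ge: "f \<in> Tate s av \<Longrightarrow> av (f \<alpha>) \<le> gnorm av f"
  unfolding gnorm_def by (rule cSup_upper) (auto intro: Tate_bdd)

lemma gnorm_le: "(\<And>\<alpha>. av (f \<alpha>) \<le> M) \<Longrightarrow> gnorm av f \<le> M"
  unfolding gnorm_def by (rule cSup_least) auto

lemma gnorm_nonneg: "f \<in> Tate s av \<Longrightarrow> 0 \<le> gnorm av f"
  using gnorm_ge[of f s "\<lambda>i. 0"] av_nonneg[of "f (\<lambda>i. 0)"] by linarith

lemma gnorm_tzero: "gnorm av (tzero :: _ \<Rightarrow> 'c) = 0"
  using av_zero_iff[of 0] by (simp add: gnorm_def tzero_def)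

lemma tzero_Tate: "(tzero :: _ \<Rightarrow> 'c) \<in> Tate s av"
  using av_zero_iff[of 0] by (simp add: Tate_def tzero_def)

lemma av_tmul_le:
  assumes f: "f \<in> Tate s av" and g: "g \<in> Tate s av"
  shows "av (tmul s f g \<alpha>) \<le> gnorm av f * gnorm av g"
  unfolding tmul_def'
proof (rule av_sum_le)
  fix \<beta>
  have "av (f \<beta> * g (\<lambda>i. \<alpha> i - \<beta> i)) = av (f \<beta>) * av (g (\<lambda>i. \<alpha> i - \<beta> i))" by (rule av_mult)
  also have "\<dots> \<le> gnorm av f * gnorm av g"
    using gnorm_ge[OF f] gnorm_ge[OF g] av_nonneg gnorm_nonneg[OF f] by (intro mult_mono) auto
  finally show "av (f \<beta> * g (\<lambda>i. \<alpha> i - \<beta> i)) \<le> gnorm av f * gnorm av g" .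
qed (use gnorm_nonneg[OF f] gnorm_nonneg[OF g] in simp)

lemma Tate_tmul:
  assumes f: "f \<in> Tate s av" and g: "g \<in> Tate s av"
  shows "tmul s f g \<in> Tate s av"
proof -
  have supp: "\<forall>\<alpha>. \<alpha> \<notin> MI s \<longrightarrow> tmul s f g \<alpha> = 0"
    using tmul_supp[OF Tate_supp[OF g], of f] by (simp add: supp_def)
  have fin: "finite {\<alpha>. av (tmul s f g \<alpha>) \<ge> e}" if e: "e > 0" for e
  proof (cases "gnorm av f * gnorm av g < e")
    case True
    then have "{\<alpha>. av (tmul s f g \<alpha>) \<ge> e} = {}" using av_tmul_le[OF f g] by (auto simp: not_le intro: le_less_trans)
    then show ?thesis by simp
  next
    case False
    then have Mf: "gnorm av f > 0" and Mg: "gnorm av g > 0"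
      using e gnorm_nonneg[OF f] gnorm_nonneg[OF g]
      by (metis linorder_not_le mult_eq_0_iff order.not_eq_order_implies_strict order_less_le_trans)+
    define Sf where "Sf = {\<beta>. av (f \<beta>) \<ge> e / gnorm av g}"
    define Sg where "Sg = {\<gamma>. av (g \<gamma>) \<ge> e / gnorm av f}"
    have "finite Sf" using f e Mg unfolding Tate_def Sf_def by auto
    moreover have "finite Sg" using g e Mf unfolding Tate_def Sg_def by auto
    ultimately have finS: "finite ((\<lambda>(\<beta>,\<gamma>). (\<lambda>i. \<beta> i + \<gamma> i)) ` (Sf \<times> Sg))" by auto
    have "{\<alpha>. av (tmul s f g \<alpha>) \<ge> e} \<subseteq> (\<lambda>(\<beta>,\<gamma>). (\<lambda>i. \<beta> i + \<gamma> i)) ` (Sf \<times> Sg)"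
    proof
      fix \<alpha> assume "\<alpha> \<in> {\<alpha>. av (tmul s f g \<alpha>) \<ge> e}"
      then have ge: "av (tmul s f g \<alpha>) \<ge> e" by simp
      have "\<exists>\<beta>\<in>Bset s \<alpha>. av (f \<beta> * g (\<lambda>i. \<alpha> i - \<beta> i)) \<ge> e"
      proof (rule ccontr)
        assume "\<not> ?thesis"
        then have "av (tmul s f g \<alpha>) < e" unfolding tmul_def' using e by (intro av_sum_less) auto
        then show False using ge by simp
      qed
      then obtain \<beta> where b: "\<beta> \<in> Bset s \<alpha>" and be: "av (f \<beta>) * av (g (\<lambda>i. \<alpha> i - \<beta> i)) \<ge> e"
        by (auto simp: av_mult)
      let ?\<gamma> = "\<lambda>i. \<alpha> i - \<beta> i"
      have gf: "av (f \<beta>) \<le> gnorm av f" and gg: "av (g ?\<gamma>) \<le> gnorm av g"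
        using gnorm_ge[OF f] gnorm_ge[OF g] by auto
      have "e \<le> av (f \<beta>) * gnorm av g"
        using be gg av_nonneg[of "f \<beta>"] by (meson mult_left_mono order_trans)
      then have "\<beta> \<in> Sf" using Mg by (simp add: Sf_def pos_divide_le_eq)
      moreover have "e \<le> gnorm av f * av (g ?\<gamma>)"
        using be gf av_nonneg[of "g ?\<gamma>"] by (meson mult_right_mono order_trans)
      then have "?\<gamma> \<in> Sg" using Mf by (simp add: Sg_def pos_divide_le_eq mult.commute)
      moreover have "\<alpha> = (\<lambda>i. \<beta> i + ?\<gamma> i)" using b by (auto simp: Bset_def fun_eq_iff)
      ultimately show "\<alpha> \<in> (\<lambda>(\<beta>,\<gamma>). (\<lambda>i. \<beta> i + \<gamma> i)) ` (Sf \<times> Sg)"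
        by (intro image_eqI[where x="(\<beta>, ?\<gamma>)"]) auto
    qed
    then show ?thesis using finS finite_subset by blast
  qed
  show ?thesis using supp fin by (simp add: Tate_def)
qed

lemma Tate_sum:
  assumes "\<And>i. i \<in> I \<Longrightarrow> F i \<in> Tate s av"
  shows "(\<lambda>\<alpha>. \<Sum>i\<in>I. F i \<alpha>) \<in> Tate s av"
proof (cases "finite I")
  case False then show ?thesis using tzero_Tate by (simp add: tzero_def)
next
  case True
  have supp: "\<forall>\<alpha>. \<alpha> \<notin> MI s \<longrightarrow> (\<Sum>i\<in>I. F i \<alpha>) = 0" using assms by (simp add: Tate_def)
  have fin: "finite {\<alpha>. av (\<Sum>i\<in>I. F i \<alpha>) \<ge> e}" if e: "e > 0" for e
  proof -
    have "{\<alpha>. av (\<Sum>i\<in>I. F i \<alpha>) \<ge> e} \<subseteq> (\<Union>i\<in>I. {\<alpha>. av (F i \<alpha>) \<ge> e})"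
    proof
      fix \<alpha> assume a: "\<alpha> \<in> {\<alpha>. av (\<Sum>i\<in>I. F i \<alpha>) \<ge> e}"
      show "\<alpha> \<in> (\<Union>i\<in>I. {\<alpha>. av (F i \<alpha>) \<ge> e})"
      proof (rule ccontr)
        assume "\<not> ?thesis"
        then have "av (\<Sum>i\<in>I. F i \<alpha>) < e" using e by (intro av_sum_less) auto
        then show False using a by simp
      qed
    qed
    moreover have "finite (\<Union>i\<in>I. {\<alpha>. av (F i \<alpha>) \<ge> e})" using True assms e by (auto simp: Tate_def)
    ultimately show ?thesis using finite_subset by blast
  qed
  show ?thesis using supp fin by (simp add: Tate_def)
qed

lemma gnorm_sum_le:
  assumes "\<And>i. i \<in> I \<Longrightarrow> F i \<in> Tate s av" "\<And>i. i \<in> I \<Longrightarrow> gnorm av (F i) \<le> M" "0 \<le> M"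
  shows "gnorm av (\<lambda>\<alpha>. \<Sum>i\<in>I. F i \<alpha>) \<le> M"
  by (rule gnorm_le, rule av_sum_le) (use assms gnorm_ge in \<open>blast intro: order_trans\<close>)+

lemma gnorm_sum_le_sum:
  assumes "\<And>i. i \<in> I \<Longrightarrow> F i \<in> Tate s av" "finite I"
  shows "gnorm av (\<lambda>\<alpha>. \<Sum>i\<in>I. F i \<alpha>) \<le> (\<Sum>i\<in>I. gnorm av (F i))"
proof (rule gnorm_sum_le[OF assms(1)])
  fix i assume "i \<in> I"
  then show "gnorm av (F i) \<le> (\<Sum>i\<in>I. gnorm av (F i))"
    using assms gnorm_nonneg by (intro member_le_sum) auto
qed (use assms gnorm_nonneg in \<open>auto intro: sum_nonneg\<close>)

end



context cinf begin

lemma Zser_Tate: "F \<in> Zser q s av \<Longrightarrow> F n \<in> Tate s av"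
  by (simp add: Zser_def)

lemma Zser_zsupp: "F \<in> Zser q s av \<Longrightarrow> zsupp s F"
  by (simp add: Zser_def zsupp_def Tate_supp)

lemma Zser_lim: "F \<in> Zser q s av \<Longrightarrow> (\<lambda>n. real q ^ n * gnorm av (F n)) \<longlonglongrightarrow> 0"
  by (simp add: Zser_def)

lemma zzero_Zser: "(zzero :: 'c zser) \<in> Zser q s av"
  by (simp add: Zser_def zzero_def tzero_Tate gnorm_tzero)

lemma Zser_zmul:
  assumes F: "F \<in> Zser q s av" and G: "G \<in> Zser q s av"
  shows "zmul s F G \<in> Zser q s av"
proof -
  define a where "a = (\<lambda>n. real q ^ n * gnorm av (F n))"
  define b where "b = (\<lambda>n. real q ^ n * gnorm av (G n))"
  have a0: "a \<longlonglongrightarrow> 0" and b0: "b \<longlonglongrightarrow> 0" using F G by (simp_all add: a_def b_def Zser_def)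
  have an: "a n \<ge> 0" "b n \<ge> 0" for n
    using gnorm_nonneg[OF Zser_Tate[OF F]] gnorm_nonneg[OF Zser_Tate[OF G]] by (simp_all add: a_def b_def)
  have T: "\<And>n. zmul s F G n \<in> Tate s av"
    unfolding zmul_def using Zser_Tate[OF F] Zser_Tate[OF G] by (intro Tate_sum Tate_tmul) auto
  obtain KA where KA: "\<forall>n. norm (a n) \<le> KA" using convergent_imp_Bseq[OF convergentI[OF a0]]
    unfolding Bseq_def by blast
  define A where "A = KA"
  have A: "\<And>n. a n \<le> A" using KA unfolding A_def by (auto simp: abs_le_iff)
  obtain KB where KB: "\<forall>n. norm (b n) \<le> KB" using convergent_imp_Bseq[OF convergentI[OF b0]]
    unfolding Bseq_def by blast
  define B where "B = KB"
  have B: "\<And>n. b n \<le> B" using KB unfolding B_def by (auto simp: abs_le_iff)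
  have A0: "A \<ge> 0" using A[of 0] an(1)[of 0] by simp
  have B0: "B \<ge> 0" using B[of 0] an(2)[of 0] by simp
  have main: "\<exists>N. \<forall>n\<ge>N. real q ^ n * gnorm av (zmul s F G n) \<le> e" if e: "e > 0" for e
  proof -
    define \<delta> where "\<delta> = e / (A + B + 1)"
    have d0: "\<delta> > 0" using e A0 B0 by (simp add: \<delta>_def)
    have dA: "A * \<delta> \<le> e" and dB: "\<delta> * B \<le> e"
      using e A0 B0 by (simp_all add: \<delta>_def field_simps)
    obtain N1 where N1': "\<And>k. k \<ge> N1 \<Longrightarrow> norm (a k - 0) < \<delta>"
      using LIMSEQ_D[OF a0 d0] by blast
    have N1: "a k < \<delta>" if "k \<ge> N1" for k using N1'[OF that] an(1)[of k] by simp
    obtain N2 where N2': "\<And>k. k \<ge> N2 \<Longrightarrow> norm (b k - 0) < \<delta>"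
      using LIMSEQ_D[OF b0 d0] by blast
    have N2: "b k < \<delta>" if "k \<ge> N2" for k using N2'[OF that] an(2)[of k] by simp
    have "real q ^ n * gnorm av (zmul s F G n) \<le> e" if n: "n \<ge> N1 + N2" for n
    proof -
      have qn: "real q ^ n > 0" using q_ge2 by simp
      have tm: "gnorm av (F k) * gnorm av (G (n - k)) \<le> e / real q ^ n" if k: "k \<le> n" for k
      proof -
        have "a k * b (n - k) \<le> e"
        proof (cases "k \<ge> N1")
          case True
          then have "a k * b (n - k) \<le> \<delta> * B" using N1[OF True] B an d0 by (intro mult_mono) auto
          then show ?thesis using dB by simp
        next
          case False
          then have "n - k \<ge> N2" using n by simp
          then have "a k * b (n - k) \<le> A * \<delta>" using N2 A an A0 by (intro mult_mono) (auto simp: less_imp_le)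
          then show ?thesis using dA by simp
        qed
        moreover have "real q ^ n = real q ^ k * real q ^ (n - k)"
          using k by (simp flip: power_add)
        then have "a k * b (n - k) = real q ^ n * (gnorm av (F k) * gnorm av (G (n - k)))"
          unfolding a_def b_def by (simp only: mult_ac)
        ultimately show ?thesis using qn by (simp add: pos_le_divide_eq mult.commute)
      qed
      have "gnorm av (zmul s F G n) \<le> e / real q ^ n"
      proof (rule gnorm_le)
        fix \<alpha>
        show "av (zmul s F G n \<alpha>) \<le> e / real q ^ n"
          unfolding zmul_def'
        proof (rule av_sum_le)
          fix k assume "k \<in> {..n}"
          then show "av (tmul s (F k) (G (n - k)) \<alpha>) \<le> e / real q ^ n"
            using av_tmul_le[OF Zser_Tate[OF F] Zser_Tate[OF G], of k "n - k" \<alpha>] tm[of k] by simp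
        qed (use e qn in simp)
      qed
      then show ?thesis using qn by (simp add: pos_le_divide_eq mult.commute)
    qed
    then show ?thesis by blast
  qed
  have "(\<lambda>n. real q ^ n * gnorm av (zmul s F G n)) \<longlonglongrightarrow> 0"
  proof (rule LIMSEQ_I)
    fix e :: real assume e: "e > 0"
    obtain N where N: "\<And>n. n \<ge> N \<Longrightarrow> real q ^ n * gnorm av (zmul s F G n) \<le> e / 2"
      using main[of "e/2"] e by auto
    have "norm (real q ^ n * gnorm av (zmul s F G n) - 0) < e" if "n \<ge> N" for n
      using N[OF that] gnorm_nonneg[OF T[of n]] e by simp
    then show "\<exists>no. \<forall>n\<ge>no. norm (real q ^ n * gnorm av (zmul s F G n) - 0) < e" by blast
  qed
  then show ?thesis using T by (simp add: Zser_def)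
qed

lemma Zser_sum:
  assumes "\<And>i. i \<in> I \<Longrightarrow> F i \<in> Zser q s av" "finite I"
  shows "(\<lambda>n \<alpha>. \<Sum>i\<in>I. F i n \<alpha>) \<in> Zser q s av"
proof -
  have T: "(\<lambda>\<alpha>. \<Sum>i\<in>I. F i n \<alpha>) \<in> Tate s av" for n using assms by (intro Tate_sum Zser_Tate) auto
  have le: "real q ^ n * gnorm av (\<lambda>\<alpha>. \<Sum>i\<in>I. F i n \<alpha>) \<le> (\<Sum>i\<in>I. real q ^ n * gnorm av (F i n))" for n
  proof -
    have "gnorm av (\<lambda>\<alpha>. \<Sum>i\<in>I. F i n \<alpha>) \<le> (\<Sum>i\<in>I. gnorm av (F i n))"
      using assms by (intro gnorm_sum_le_sum Zser_Tate) auto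
    then show ?thesis using q_ge2 by (simp add: sum_distrib_left[symmetric])
  qed
  have "(\<lambda>n. \<Sum>i\<in>I. real q ^ n * gnorm av (F i n)) \<longlonglongrightarrow> 0"
    using assms by (intro tendsto_null_sum Zser_lim) auto
  moreover have "(\<lambda>n. real q ^ n * gnorm av (\<lambda>\<alpha>. \<Sum>i\<in>I. F i n \<alpha>)) \<longlonglongrightarrow> 0"
  proof (rule tendsto_sandwich[OF _ _ tendsto_const calculation])
    show "\<forall>\<^sub>F n in sequentially. (0::real) \<le> real q ^ n * gnorm av (\<lambda>\<alpha>. \<Sum>i\<in>I. F i n \<alpha>)"
      by (intro always_eventually allI mult_nonneg_nonneg gnorm_nonneg[OF T]) simp
    show "\<forall>\<^sub>F n in sequentially. real q ^ n * gnorm av (\<lambda>\<alpha>. \<Sum>i\<in>I. F i n \<alpha>) \<le> (\<Sum>i\<in>I. real q ^ n * gnorm av (F i n))"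
      by (intro always_eventually allI le)
  qed
  then show ?thesis using T by (simp add: Zser_def)
qed

lemma Fqtz_Tate: "F \<in> Fqtz q s \<Longrightarrow> F n \<in> Tate s av"
proof -
  assume F: "F \<in> Fqtz q s"
  have "finite {\<alpha>. av (F n \<alpha>) \<ge> e}" if "e > 0" for e
  proof -
    have "{\<alpha>. av (F n \<alpha>) \<ge> e} \<subseteq> {\<alpha>. F n \<alpha> \<noteq> 0}"
    proof
      fix \<alpha> assume "\<alpha> \<in> {\<alpha>. av (F n \<alpha>) \<ge> e}"
      then have "av (F n \<alpha>) \<noteq> 0" using that by simp
      then show "\<alpha> \<in> {\<alpha>. F n \<alpha> \<noteq> 0}" using av_zero_iff[of 0] by auto
    qed
    then show ?thesis using F finite_subset by (auto simp: Fqtz_def)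
  qed
  then show ?thesis using F by (simp add: Tate_def Fqtz_def)
qed

lemma Fqtz_Zser: "F \<in> Fqtz q s \<Longrightarrow> F \<in> Zser q s av"
proof -
  assume F: "F \<in> Fqtz q s"
  obtain N where N: "\<And>n. F n \<noteq> tzero \<Longrightarrow> n < N"
    using F by (auto simp: Fqtz_def finite_nat_set_iff_bounded)
  have "real q ^ n * gnorm av (F n) = 0" if "n \<ge> N" for n
  proof -
    have "F n = tzero" using N[of n] that by (cases "F n = tzero") auto
    then show ?thesis by (simp add: gnorm_tzero)
  qed
  then have "eventually (\<lambda>n. real q ^ n * gnorm av (F n) = 0) sequentially"
    unfolding eventually_sequentially by blast
  then have "(\<lambda>n. real q ^ n * gnorm av (F n)) \<longlonglongrightarrow> 0" by (rule tendsto_eventually)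
  then show ?thesis using Fqtz_Tate[OF F] by (simp add: Zser_def)
qed

lemma Zser_Fqtz:
  assumes F: "F \<in> Zser q s av" and fx: "\<And>n \<alpha>. F n \<alpha> ^ q = F n \<alpha>"
  shows "F \<in> Fqtz q s"
proof -
  have av1: "F n \<alpha> \<noteq> 0 \<Longrightarrow> av (F n \<alpha>) = 1" for n \<alpha> using av_Fq fx by blast
  have fin1: "finite {\<alpha>. F n \<alpha> \<noteq> 0}" for n
  proof -
    have "{\<alpha>. F n \<alpha> \<noteq> 0} \<subseteq> {\<alpha>. av (F n \<alpha>) \<ge> 1}" using av1 by auto
    moreover have "finite {\<alpha>. av (F n \<alpha>) \<ge> 1}" using Zser_Tate[OF F, of n] by (simp add: Tate_def)
    ultimately show ?thesis using finite_subset by blast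
  qed
  obtain N where N': "\<And>n. n \<ge> N \<Longrightarrow> norm (real q ^ n * gnorm av (F n) - 0) < 1"
    using LIMSEQ_D[OF Zser_lim[OF F], of 1] by auto
  have N: "real q ^ n * gnorm av (F n) < 1" if "n \<ge> N" for n
    using N'[OF that] by simp
  have "F n \<noteq> tzero \<Longrightarrow> n < N" for n
  proof (rule ccontr)
    assume nz: "F n \<noteq> tzero" and "\<not> n < N"
    then have lt: "real q ^ n * gnorm av (F n) < 1" using N by simp
    obtain \<alpha> where "F n \<alpha> \<noteq> 0" using nz by (auto simp: tzero_def)
    then have "1 \<le> gnorm av (F n)" using gnorm_ge[OF Zser_Tate[OF F], of n \<alpha>] av1 by simp
    moreover have "1 \<le> real q ^ n" using q_ge2 by simp
    ultimately have "1 * 1 \<le> real q ^ n * gnorm av (F n)" by (intro mult_mono) auto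
    then show False using lt by simp
  qed
  then have "{n. F n \<noteq> tzero} \<subseteq> {..<N}" by auto
  then have "finite {n. F n \<noteq> tzero}" using finite_subset by blast
  then show ?thesis using fin1 fx Zser_Tate[OF F]
    by (simp add: Fqtz_def in_Fq_def Tate_def)
qed

end



context cinf begin

lemma Tate_ttw:
  assumes n: "n \<ge> 1" and f: "f \<in> Tate s av"
  shows "ttw q (- int n) f \<in> Tate s av"
proof -
  have supp: "\<forall>\<alpha>. \<alpha> \<notin> MI s \<longrightarrow> ttw q (- int n) f \<alpha> = 0"
    using f twc_zero[OF n] by (simp add: Tate_def ttw_def)
  have fin: "finite {\<alpha>. av (ttw q (- int n) f \<alpha>) \<ge> e}" if e: "e > 0" for e
  proof -
    have "{\<alpha>. av (ttw q (- int n) f \<alpha>) \<ge> e} \<subseteq> {\<alpha>. av (f \<alpha>) \<ge> e ^ (q ^ n)}"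
    proof
      fix \<alpha> assume "\<alpha> \<in> {\<alpha>. av (ttw q (- int n) f \<alpha>) \<ge> e}"
      then have "e \<le> av (twc q (- int n) (f \<alpha>))" by (simp add: ttw_def)
      then have "e ^ (q ^ n) \<le> av (twc q (- int n) (f \<alpha>)) ^ (q ^ n)" using e by (intro power_mono) auto
      then show "\<alpha> \<in> {\<alpha>. av (f \<alpha>) \<ge> e ^ (q ^ n)}" using twc_av[OF n] by simp
    qed
    moreover have "finite {\<alpha>. av (f \<alpha>) \<ge> e ^ (q ^ n)}" using f e by (simp add: Tate_def)
    ultimately show ?thesis using finite_subset by blast
  qed
  show ?thesis using supp fin by (simp add: Tate_def)
qed

end

locale setting = cinf q av \<theta> for q av and \<theta> :: "'c::field" +
  fixes s r :: nat and A :: "nat \<Rightarrow> (nat \<Rightarrow> nat) \<Rightarrow> 'c" and \<Psi> \<Psi>' :: "nat \<Rightarrow> nat \<Rightarrow> 'c zser"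
  assumes r_pos: "r \<ge> 1"
    and A_tate: "\<And>i. 1 \<le> i \<Longrightarrow> i \<le> r \<Longrightarrow> A i \<in> Tate s av"
    and A_unit: "tunit s av (A r)"
    and Psi: "\<Psi> \<in> mats r (Zser q s av)"
    and Psi': "\<Psi>' \<in> mats r (Zser q s av)"
    and inv1: "matmul s r \<Psi> \<Psi>' = idmat r"
    and inv2: "matmul s r \<Psi>' \<Psi> = idmat r"
    and func_eq: "mtw q (-1) \<Psi> = matmul s r (PhiMat q s av \<theta> r A) \<Psi>"
begin

abbreviation "Phi \<equiv> PhiMat q s av \<theta> r A"
abbreviation "Ar \<equiv> ttw q (- int r) (A r)"
abbreviation "ia \<equiv> tinv s av Ar"

lemma Ar_Tate: "Ar \<in> Tate s av"
  using Tate_ttw[OF r_pos A_tate[OF r_pos order.refl]] .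

lemma ia_spec: "ia \<in> Tate s av \<and> tmul s Ar ia = tone"
proof -
  obtain g where g: "g \<in> Tate s av" "tmul s (A r) g = tone" using A_unit by (auto simp: tunit_def)
  have "ttw q (- int r) g \<in> Tate s av" using Tate_ttw[OF r_pos g(1)] .
  moreover have "tmul s Ar (ttw q (- int r) g) = tone"
    using ttw_tmul[OF r_pos, of s "A r" g] g(2) ttw_tone[OF r_pos] by simp
  ultimately have "\<exists>g. g \<in> Tate s av \<and> tmul s Ar g = tone" by blast
  then show ?thesis unfolding tinv_def by (rule someI_ex)
qed

lemma ia_Tate: "ia \<in> Tate s av" using ia_spec by blast

lemma ia_left: "tmul s ia Ar = tone"
  using ia_spec tmul_comm[OF Tate_supp[OF ia_Tate] Tate_supp[OF Ar_Tate]] by simp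

lemma tmul_ia_nz:
  assumes x: "supp s x" "x \<noteq> tzero"
  shows "tmul s x ia \<noteq> tzero"
proof
  assume h: "tmul s x ia = tzero"
  have "x = tmul s x tone" using tmul_tone_right[OF x(1)] by simp
  also have "\<dots> = tmul s (tmul s x ia) Ar" by (simp add: tmul_assoc ia_left)
  also have "\<dots> = tzero" by (simp add: h tmul_tzero_left)
  finally show False using x(2) by simp
qed

lemma Phi_zsupp: "zsupp s (Phi k j)"
proof -
  have si: "supp s ia" using Tate_supp[OF ia_Tate] .
  show ?thesis
    unfolding PhiMat_def Let_def zsupp_def
    using si zone_zsupp[of s] zzero_zsupp[of s]
    by (auto simp: zsupp_def tzero_supp tmul_supp)
qed

lemma Phi_out: "k \<ge> r \<or> j \<ge> r \<Longrightarrow> Phi k j = zzero"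
  by (auto simp: PhiMat_def Let_def)

lemma Phi_other: "k < r - 1 \<Longrightarrow> j < r \<Longrightarrow> Phi k j = (if j = k + 1 then zone else zzero)"
  by (auto simp: PhiMat_def Let_def)

lemma Phi_last0: "Phi (r - 1) 0 = (\<lambda>n. if n = 0 then tmul s (tconst (- \<theta>)) ia else if n = 1 then ia else tzero)"
  using r_pos by (auto simp: PhiMat_def Let_def)

lemma Phi_lastj: "0 < j \<Longrightarrow> j < r \<Longrightarrow> n \<noteq> 0 \<Longrightarrow> Phi (r - 1) j n = tzero"
  using r_pos by (auto simp: PhiMat_def Let_def)

lemma Psi_entries: "\<And>i j. i < r \<Longrightarrow> j < r \<Longrightarrow> \<Psi> i j \<in> Zser q s av" "\<And>i j. i \<ge> r \<or> j \<ge> r \<Longrightarrow> \<Psi> i j = zzero"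
  using Psi by (auto simp: mats_def)

lemma Psi'_entries: "\<And>i j. i < r \<Longrightarrow> j < r \<Longrightarrow> \<Psi>' i j \<in> Zser q s av" "\<And>i j. i \<ge> r \<or> j \<ge> r \<Longrightarrow> \<Psi>' i j = zzero"
  using Psi' by (auto simp: mats_def)

lemma key: "matmul s r (mtw q (-1) \<Psi>') Phi = \<Psi>'"
proof -
  define X where "X = matmul s r (mtw q (-1) \<Psi>') Phi"
  have Xs: "\<And>i j. i < r \<Longrightarrow> j < r \<Longrightarrow> zsupp s (X i j)" unfolding X_def by (rule matmul_zsupp[OF Phi_zsupp])
  have Xo: "\<And>i j. i \<ge> r \<or> j \<ge> r \<Longrightarrow> X i j = zzero" unfolding X_def by (auto simp: matmul_def)
  have X1: "X = matmul s r X (idmat r)" using matmul_idmat_right[OF Xs Xo] by simp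
  have "matmul s r X \<Psi> = matmul s r (mtw q (-1) \<Psi>') (mtw q (-1) \<Psi>)"
    unfolding X_def by (simp add: matmul_assoc func_eq)
  also have "\<dots> = idmat r" by (simp add: mtw_matmul[symmetric] inv2 mtw_idmat)
  finally have X2: "matmul s r X \<Psi> = idmat r" .
  have "X = matmul s r (matmul s r X \<Psi>) \<Psi>'" using X1 by (simp add: matmul_assoc inv1)
  also have "\<dots> = \<Psi>'" using X2 Psi'_entries(2) by (simp add: matmul_idmat_left)
  finally show ?thesis by (simp add: X_def)
qed

lemma vecmat_Zser:
  assumes "\<And>k. k < r \<Longrightarrow> g k \<in> Zser q s av" "\<And>i j. i < r \<Longrightarrow> j < r \<Longrightarrow> M i j \<in> Zser q s av"
  shows "vecmat s r g M \<in> rowvecs r (Zser q s av)"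
  unfolding rowvecs_def vecmat_def using assms
  by (auto intro!: Zser_sum Zser_zmul)

lemma rowvec_Fqtz_zsupp: "h \<in> rowvecs r (Fqtz q s) \<Longrightarrow> zsupp s (h j :: 'c zser)"
  using Fqtz_Zser[of "h j"] Zser_zsupp[of "h j"] zzero_zsupp[of s] by (cases "j < r") (auto simp: rowvecs_def)

lemma rowvec_Zser_zsupp: "g \<in> rowvecs r (Zser q s av) \<Longrightarrow> zsupp s (g j)"
  using Zser_zsupp[of "g j"] zzero_zsupp[of s] by (cases "j < r") (auto simp: rowvecs_def)

lemma partA_sub: "g \<in> Vphi q s av \<theta> r A \<Longrightarrow> \<exists>h. g = vecmat s r h \<Psi>' \<and> h \<in> rowvecs r (Fqtz q s)"
proof -
  assume gV: "g \<in> Vphi q s av \<theta> r A"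
  then have gZ: "g \<in> rowvecs r (Zser q s av)" and eq: "vecmat s r (vtw q (-1) g) Phi = g"
    by (auto simp: Vphi_def)
  define h where "h = vecmat s r g \<Psi>"
  have hZ: "h \<in> rowvecs r (Zser q s av)" unfolding h_def
    using gZ Psi_entries by (intro vecmat_Zser) (auto simp: rowvecs_def)
  have "vtw q (-1) h = vecmat s r (vtw q (-1) g) (matmul s r Phi \<Psi>)"
    unfolding h_def by (simp add: vtw_vecmat func_eq)
  also have "\<dots> = h" unfolding h_def by (simp add: vecmat_assoc[symmetric] eq)
  finally have hfix: "vtw q (-1) h = h" .
  have "h j \<in> Fqtz q s" if j: "j < r" for j
  proof (rule Zser_Fqtz)
    show "h j \<in> Zser q s av" using hZ j by (simp add: rowvecs_def)
    fix n \<alpha>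
    have "twc q (-1) (h j n \<alpha>) = h j n \<alpha>"
      using fun_cong[OF fun_cong[OF fun_cong[OF hfix, of j], of n], of \<alpha>] by (simp add: vtw_def ztw_def ttw_def)
    then show "h j n \<alpha> ^ q = h j n \<alpha>" by (rule twc1_fixed)
  qed
  moreover have "h j = zzero" if "j \<ge> r" for j using that by (simp add: h_def vecmat_def)
  ultimately have hF: "h \<in> rowvecs r (Fqtz q s)" by (simp add: rowvecs_def)
  have "vecmat s r h \<Psi>' = vecmat s r g (idmat r)" by (simp add: h_def vecmat_assoc inv1)
  also have "\<dots> = g" using gZ rowvec_Zser_zsupp[OF gZ] by (intro vecmat_idmat) (auto simp: rowvecs_def)
  finally show ?thesis using hF by blast
qed

lemma Fqtz_ztw: "F \<in> Fqtz q s \<Longrightarrow> ztw q (-1) F = (F :: 'c zser)"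
  by (auto simp: Fqtz_def ztw_def ttw_def in_Fq_def fun_eq_iff intro!: Fq_twc1)

lemma partA_sup: "h \<in> rowvecs r (Fqtz q s) \<Longrightarrow> vecmat s r h \<Psi>' \<in> Vphi q s av \<theta> r A"
proof -
  assume hF: "h \<in> rowvecs r (Fqtz q s)"
  have gZ: "vecmat s r h \<Psi>' \<in> rowvecs r (Zser q s av)"
    using hF Psi'_entries Fqtz_Zser by (intro vecmat_Zser) (auto simp: rowvecs_def)
  have hfix: "vtw q (-1) h = h"
  proof
    fix j show "vtw q (-1) h j = h j"
      using hF Fqtz_ztw[of "h j"] ztw_zzero by (cases "j < r") (auto simp: vtw_def rowvecs_def)
  qed
  have "vecmat s r (vtw q (-1) (vecmat s r h \<Psi>')) Phi = vecmat s r h (matmul s r (mtw q (-1) \<Psi>') Phi)"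
    by (simp add: vtw_vecmat hfix vecmat_assoc)
  also have "\<dots> = vecmat s r h \<Psi>'" by (simp add: key)
  finally show ?thesis using gZ by (simp add: Vphi_def)
qed

lemma partA: "Vphi q s av \<theta> r A = {vecmat s r h \<Psi>' | h. h \<in> rowvecs r (Fqtz q s)}"
  using partA_sub partA_sup by blast

end



context setting begin

lemma zone_Fqtz: "(zone :: 'c zser) \<in> Fqtz q s"
proof -
  have "{n. zone n \<noteq> (tzero :: _ \<Rightarrow> 'c)} \<subseteq> {0}" by (auto simp: zone_def)
  then have f1: "finite {n. zone n \<noteq> (tzero :: _ \<Rightarrow> 'c)}" using finite_subset by blast
  have f2: "finite {\<alpha>. zone n \<alpha> \<noteq> (0::'c)}" for n
  proof -
    have "{\<alpha>. zone n \<alpha> \<noteq> (0::'c)} \<subseteq> {\<lambda>i. 0}" by (auto simp: zone_def tone_def tzero_def)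
    then show ?thesis using finite_subset by blast
  qed
  have q0: "q > 0" using q_ge2 by simp
  show ?thesis using f1 f2 q0
    by (auto simp: Fqtz_def zone_def tone_def tzero_def MI_def in_Fq_def)
qed

lemma zzero_Fqtz: "(zzero :: 'c zser) \<in> Fqtz q s"
  using q_ge2 by (auto simp: Fqtz_def zzero_def tzero_def in_Fq_def)

lemma partB: "\<exists>b. (\<forall>i<r. b i \<in> Vphi q s av \<theta> r A) \<and>
            (\<forall>g\<in>Vphi q s av \<theta> r A. \<exists>!c. c \<in> rowvecs r (Fqtz q s) \<and> g = lincomb s r c b)"
proof (intro exI conjI allI impI ballI)
  fix i assume i: "i < r"
  define e where "e = (\<lambda>j. if j = i then (zone :: 'c zser) else zzero)"
  have eF: "e \<in> rowvecs r (Fqtz q s)" using i zone_Fqtz zzero_Fqtz by (auto simp: e_def rowvecs_def)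
  have "vecmat s r e \<Psi>' = \<Psi>' i" unfolding e_def by (rule vecmat_unit[OF i Psi'_entries(2)])
  then show "\<Psi>' i \<in> Vphi q s av \<theta> r A" using partA_sup[OF eF] by simp
next
  fix g assume gV: "g \<in> Vphi q s av \<theta> r A"
  have lc: "lincomb s r c \<Psi>' = vecmat s r c \<Psi>'" for c by (simp add: lincomb_def vecmat_def)
  have bk: "vecmat s r (vecmat s r c \<Psi>') \<Psi> = c" if c: "c \<in> rowvecs r (Fqtz q s)" for c
  proof -
    have "vecmat s r (vecmat s r c \<Psi>') \<Psi> = vecmat s r c (idmat r)" by (simp add: vecmat_assoc inv2)
    also have "\<dots> = c" using c rowvec_Fqtz_zsupp[OF c] by (intro vecmat_idmat) (auto simp: rowvecs_def)
    finally show ?thesis .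
  qed
  obtain h where h: "g = vecmat s r h \<Psi>'" "h \<in> rowvecs r (Fqtz q s)" using partA_sub[OF gV] by blast
  show "\<exists>!c. c \<in> rowvecs r (Fqtz q s) \<and> g = lincomb s r c \<Psi>'"
  proof (rule ex1I[of _ h])
    show "h \<in> rowvecs r (Fqtz q s) \<and> g = lincomb s r h \<Psi>'" using h lc by simp
  next
    fix c assume c: "c \<in> rowvecs r (Fqtz q s) \<and> g = lincomb s r c \<Psi>'"
    then have "vecmat s r c \<Psi>' = vecmat s r h \<Psi>'" using h lc by simp
    then show "c = h" using bk[of c] bk[OF h(2)] c by metis
  qed
qed

lemma zero_V: "(\<lambda>j. zzero) \<in> Vphi q s av \<theta> r A"
proof -
  have "vtw q (-1) (\<lambda>j. zzero) = (\<lambda>j. (zzero :: 'c zser))" by (simp add: vtw_def ztw_zzero)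
  moreover have "vecmat s r (\<lambda>j. zzero) Phi = (\<lambda>j. zzero)"
    by (auto simp: vecmat_def zzero_def tzero_def fun_eq_iff)
  ultimately show ?thesis using zzero_Zser by (simp add: Vphi_def rowvecs_def)
qed

lemma zero_Tpolyz: "(\<lambda>j. zzero) \<in> rowvecs r (Tpolyz s av)"
  by (simp add: rowvecs_def Tpolyz_def zzero_def tzero_Tate)

lemma rows:
  assumes gV: "g \<in> Vphi q s av \<theta> r A"
  shows "g 0 n \<alpha> = zmul s (vtw q (-1) g (r - 1)) (Phi (r - 1) 0) n \<alpha>"
    and "0 < j \<Longrightarrow> j < r \<Longrightarrow> g j n \<alpha> = vtw q (-1) g (j - 1) n \<alpha> + zmul s (vtw q (-1) g (r - 1)) (Phi (r - 1) j) n \<alpha>"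
proof -
  define G where "G = vtw q (-1) g"
  have gZ: "g \<in> rowvecs r (Zser q s av)" and eq: "vecmat s r G Phi = g"
    using gV by (auto simp: Vphi_def G_def)
  have Gs: "zsupp s (G k)" for k unfolding G_def vtw_def by (rule ztw_zsupp[OF rowvec_Zser_zsupp[OF gZ]])
  have gen: "g j n \<alpha> = (\<Sum>k<r-1. zmul s (G k) (if j = k + 1 then zone else zzero) n \<alpha>) + zmul s (G (r-1)) (Phi (r-1) j) n \<alpha>"
    if j: "j < r" for j
  proof -
    have "g j n \<alpha> = vecmat s r G Phi j n \<alpha>" using eq by simp
    also have "\<dots> = (\<Sum>k<r. zmul s (G k) (Phi k j) n \<alpha>)" using j by (simp add: vecmat_def)
    also have "{..<r} = {..<Suc (r - 1)}" using r_pos by simp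
    also have "(\<Sum>k<Suc (r - 1). zmul s (G k) (Phi k j) n \<alpha>) =
               (\<Sum>k<r-1. zmul s (G k) (Phi k j) n \<alpha>) + zmul s (G (r-1)) (Phi (r-1) j) n \<alpha>"
      by (rule sum.lessThan_Suc)
    also have "(\<Sum>k<r-1. zmul s (G k) (Phi k j) n \<alpha>) = (\<Sum>k<r-1. zmul s (G k) (if j = k + 1 then zone else zzero) n \<alpha>)"
      by (rule sum.cong[OF refl]) (simp add: Phi_other j)
    finally show ?thesis .
  qed
  have "(\<Sum>k<r-1. zmul s (G k) (if 0 = k + 1 then zone else zzero) n \<alpha>) = 0"
    by (simp add: zzero_def tzero_def)
  then show "g 0 n \<alpha> = zmul s (vtw q (-1) g (r - 1)) (Phi (r - 1) 0) n \<alpha>"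
    using gen[of 0] r_pos by (simp add: G_def)
  assume j: "0 < j" "j < r"
  have "(\<Sum>k<r-1. zmul s (G k) (if j = k + 1 then zone else zzero) n \<alpha>) =
        (\<Sum>k<r-1. zmul s (G k) (if k = j - 1 then zone else zzero) n \<alpha>)"
    using j by (intro sum.cong refl) auto
  also have "\<dots> = G (j - 1) n \<alpha>" using j Gs by (intro sum_zmul_unit_right) auto
  finally show "g j n \<alpha> = vtw q (-1) g (j - 1) n \<alpha> + zmul s (vtw q (-1) g (r - 1)) (Phi (r - 1) j) n \<alpha>"
    using gen[OF j(2)] by (simp add: G_def)
qed

lemma ttw1_eq_tzero: "ttw q (-1) f = tzero \<longleftrightarrow> f = (tzero :: _ \<Rightarrow> 'c)"
  using ttw_eq_tzero[of 1 f] by simp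

lemma partC_sub:
  assumes gV: "g \<in> Vphi q s av \<theta> r A" and gT: "g \<in> rowvecs r (Tpolyz s av)"
  shows "g = (\<lambda>j. zzero)"
proof -
  define G where "G = vtw q (-1) g"
  have gZ: "g \<in> rowvecs r (Zser q s av)" using gV by (auto simp: Vphi_def)
  have Gk: "G k n = ttw q (-1) (g k n)" for k n by (simp add: G_def vtw_def ztw_def ttw_def)
  have gsupp: "supp s (g k n)" for k n using rowvec_Zser_zsupp[OF gZ, of k] by (simp add: zsupp_def)
  have row0: "g 0 n \<alpha> = zmul s (G (r - 1)) (Phi (r - 1) 0) n \<alpha>" for n \<alpha> using rows(1)[OF gV] by (simp add: G_def)
  have rowj: "g j n \<alpha> = G (j - 1) n \<alpha> + zmul s (G (r - 1)) (Phi (r - 1) j) n \<alpha>" if "0 < j" "j < r" for j n \<alpha>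
    using rows(2)[OF gV that] by (simp add: G_def)
  define S where "S = {n. g (r - 1) n \<noteq> tzero}"
  have finS: "finite S" using gT r_pos by (simp add: S_def rowvecs_def Tpolyz_def)
  show ?thesis
  proof (cases "S = {}")
    case True
    then have "g (r - 1) n = tzero" for n by (auto simp: S_def)
    then have G0: "G (r - 1) n = tzero" for n by (simp add: Gk ttw1_eq_tzero)
    have zm0: "zmul s (G (r - 1)) X n \<alpha> = 0" for X n \<alpha>
      using G0 by (simp add: zmul_def' tmul_tzero_left tzero_def)
    have "j < r \<Longrightarrow> g j n \<alpha> = 0" for j n \<alpha>
    proof (induction j arbitrary: n \<alpha>)
      case 0 then show ?case using row0 zm0 by simp
    next
      case (Suc j)
      have "g (Suc j) n \<alpha> = G j n \<alpha>" using rowj[of "Suc j" n \<alpha>] Suc.prems zm0 by simp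
      also have "\<dots> = twc q (-1) (g j n \<alpha>)" by (simp add: Gk ttw_def)
      also have "\<dots> = 0" using Suc twc1_zero by simp
      finally show ?case .
    qed
    then have "g j n \<alpha> = 0" for j n \<alpha> using gT by (cases "j < r") (auto simp: rowvecs_def zzero_def tzero_def)
    then show ?thesis by (auto simp: fun_eq_iff zzero_def tzero_def)
  next
    case False
    define N where "N = Max S"
    have NS: "N \<in> S" using finS False by (simp add: N_def)
    have above: "n > N \<Longrightarrow> g (r - 1) n = tzero" for n
      using Max_ge[OF finS, of n] by (auto simp: N_def S_def)
    have GN: "G (r - 1) N \<noteq> tzero" using NS by (simp add: S_def Gk ttw1_eq_tzero)
    have GsN: "supp s (G (r - 1) N)" using ttw_supp[of 1 s "g (r - 1) N"] gsupp by (simp add: Gk)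
    have GSuc: "G (r - 1) (Suc N) = tzero" using above[of "Suc N"] by (simp add: Gk ttw_tzero[of 1, simplified])
    have claim: "j < r \<Longrightarrow> g j (Suc N) \<noteq> tzero" for j
    proof (induction j)
      case 0
      have "g 0 (Suc N) \<alpha> = tmul s (G (r - 1) N) ia \<alpha>" for \<alpha>
      proof -
        have "g 0 (Suc N) \<alpha> = (\<Sum>k\<le>Suc N. tmul s (G (r - 1) k) (Phi (r - 1) 0 (Suc N - k)) \<alpha>)"
          using row0 by (simp add: zmul_def')
        also have "\<dots> = (\<Sum>k\<le>Suc N. if k = N then tmul s (G (r - 1) N) ia \<alpha> else 0)"
        proof (rule sum.cong[OF refl])
          fix k assume k: "k \<in> {..Suc N}"
          show "tmul s (G (r - 1) k) (Phi (r - 1) 0 (Suc N - k)) \<alpha> = (if k = N then tmul s (G (r - 1) N) ia \<alpha> else 0)"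
          proof (cases "k = N")
            case True then show ?thesis using Phi_last0 by simp
          next
            case False
            show ?thesis
            proof (cases "k = Suc N")
              case True then show ?thesis using GSuc by (simp add: tmul_tzero_left tzero_def)
            next
              case False
              then have "Suc N - k \<noteq> 0" "Suc N - k \<noteq> 1" using k \<open>k \<noteq> N\<close> by auto
              then show ?thesis using \<open>k \<noteq> N\<close> Phi_last0 by (simp add: tmul_tzero_right tzero_def)
            qed
          qed
        qed
        also have "\<dots> = tmul s (G (r - 1) N) ia \<alpha>" by (subst sum.delta) simp_all
        finally show ?thesis .
      qed
      then have "g 0 (Suc N) = tmul s (G (r - 1) N) ia" by (rule ext)
      then show ?case using tmul_ia_nz[OF GsN GN] by simp
    next
      case (Suc j)
      have "g (Suc j) (Suc N) \<alpha> = G j (Suc N) \<alpha>" for \<alpha>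
      proof -
        have "zmul s (G (r - 1)) (Phi (r - 1) (Suc j)) (Suc N) \<alpha> = 0"
          unfolding zmul_def'
        proof (rule sum.neutral, rule ballI)
          fix k assume k: "k \<in> {..Suc N}"
          show "tmul s (G (r - 1) k) (Phi (r - 1) (Suc j) (Suc N - k)) \<alpha> = 0"
          proof (cases "k = Suc N")
            case True then show ?thesis using GSuc by (simp add: tmul_tzero_left tzero_def)
          next
            case False
            then have "Suc N - k \<noteq> 0" using k by auto
            then show ?thesis using Suc.prems Phi_lastj[of "Suc j" "Suc N - k"] by (simp add: tmul_tzero_right tzero_def)
          qed
        qed
        then show ?thesis using rowj[of "Suc j" "Suc N" \<alpha>] Suc.prems by simp
      qed
      then have "g (Suc j) (Suc N) = ttw q (-1) (g j (Suc N))" by (simp add: fun_eq_iff Gk)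
      then show ?case using Suc ttw1_eq_tzero by simp
    qed
    have "Suc N \<in> S" using claim[of "r - 1"] r_pos by (simp add: S_def)
    then have "Suc N \<le> N" using Max_ge[OF finS] by (simp add: N_def)
    then show ?thesis by simp
  qed
qed

lemma partC: "Vphi q s av \<theta> r A \<inter> rowvecs r (Tpolyz s av) = {\<lambda>j. zzero}"
  using partC_sub zero_V zero_Tpolyz by blast

end

theorem proposition4p14:
  fixes q s r :: nat and av :: "'c::field \<Rightarrow> real" and \<theta> :: 'c
    and A :: "nat \<Rightarrow> (nat \<Rightarrow> nat) \<Rightarrow> 'c"
    and \<Psi> \<Psi>' :: "nat \<Rightarrow> nat \<Rightarrow> 'c zser"
  assumes Cinf: "is_Cinf q av \<theta>"
    and r_pos: "r \<ge> 1"
    and A_tate: "\<And>i. 1 \<le> i \<Longrightarrow> i \<le> r \<Longrightarrow> A i \<in> Tate s av"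
    and A_unit: "tunit s av (A r)"
    and Psi: "\<Psi> \<in> mats r (Zser q s av)"
    and Psi': "\<Psi>' \<in> mats r (Zser q s av)"
    and inv1: "matmul s r \<Psi> \<Psi>' = idmat r"
    and inv2: "matmul s r \<Psi>' \<Psi> = idmat r"
    and func_eq: "mtw q (-1) \<Psi> = matmul s r (PhiMat q s av \<theta> r A) \<Psi>"
  shows "Vphi q s av \<theta> r A = {vecmat s r h \<Psi>' | h. h \<in> rowvecs r (Fqtz q s)}
     \<and> (\<exists>b. (\<forall>i<r. b i \<in> Vphi q s av \<theta> r A) \<and>
            (\<forall>g\<in>Vphi q s av \<theta> r A. \<exists>!c. c \<in> rowvecs r (Fqtz q s) \<and> g = lincomb s r c b))
     \<and> Vphi q s av \<theta> r A \<inter> rowvecs r (Tpolyz s av) = {\<lambda>j. zzero}"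
proof -
  interpret S: setting q av \<theta> s r A \<Psi> \<Psi>'
    by (unfold_locales) (use assms in auto)
  show ?thesis using S.partA S.partB S.partC by blast
qed



end
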